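(* Let $$F(t;x,y,w,u,z,v)=\sum_{s\in\mathcal{A},\,|s|>\mathsf{max}(s)}t^{|s|}x^{\mathsf{rep}(s)}y^{\mathsf{max}(s)}w^{\mathsf{ealm}(s)}u^{\mathsf{asc}(s)}z^{\mathsf{zero}(s)}v^{\mathsf{rmin}(s)}$$ and $r=t(u+x-xu)$. Then $$\Big(1-\frac{ry-1}{y(1-w)}\Big)F(t;x,y,w,u,z,v) =\frac{xyzvt^2\big(y^2tuwv(1-z)+z(y-yr+1)\big)}{(1-ytu)(1-ytuvw)(y-yzr+z)}-\frac{tx}{1-w}F(t;x,wy,1,u,z,v)$$ $$+(tux+y^{-1}-tu)\frac{wy(1-z)+z(y-yr+1)}{(1-w)(y-yzr+z)}F(t;x,y,1,u,z,v)$$ $$+\frac{y^2u^2vt^2z(1-v)(tux+y^{-1}-tu)}{1-ytu}\cdot\frac{y^2tuvw(1-z)+z(y-yr+1)}{(1-ytuvw)(y-yzr+z)}F(t;x,y,1,u,1,v).$$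
   Context: For a sequence $s=(s_1,\dots,s_n)$, $\mathsf{asc}(s)=|\{i\in[n-1]:s_i<s_{i+1}\}|$. An ascent sequence of length $n$ is a sequence of non-negative integers with $s_1=0$ and $s_i\le\mathsf{asc}(s_1,\dots,s_{i-1})+1$ for $2\le i\le n$; $\mathcal{A}$ is the set of all ascent sequences (all lengths $n\ge1$), $|s|$ the length. $\mathsf{rep}(s)=|s|-|\{s_1,\dots,s_n\}|$; $\mathsf{zero}(s)=|\{i:s_i=0\}|$; $\mathsf{max}(s)=|\{i:s_i=i-1\}|$; $\mathsf{rmin}(s)$ is the number of entries $s_i$ with $s_i<s_j$ for all $j>i$; $\mathsf{ealm}(s)=s_{\mathsf{max}(s)+1}$ when $\mathsf{max}(s)\ne|s|$. *)

theory Defs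
  imports "HOL-Computational_Algebra.Formal_Power_Series"
begin

text \<open>Sequences are nat lists, 0-indexed: paper's s_i is s ! (i-1).\<close>

definition asc :: "nat list \<Rightarrow> nat" where
  "asc s = card {i. Suc i < length s \<and> s ! i < s ! Suc i}"

definition ascent_seq :: "nat list \<Rightarrow> bool" where
  "ascent_seq s \<longleftrightarrow> s \<noteq> [] \<and> s ! 0 = 0 \<and>
     (\<forall>i. 1 \<le> i \<and> i < length s \<longrightarrow> s ! i \<le> asc (take i s) + 1)"

definition rep :: "nat list \<Rightarrow> nat" where
  "rep s = length s - card (set s)"

definition zero_st :: "nat list \<Rightarrow> nat" where
  "zero_st s = card {i. i < length s \<and> s ! i = 0}"

text \<open>max(s) = |{i : s_i = i-1}| (1-indexed), i.e. s ! j = j (0-indexed).\<close>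
definition max_st :: "nat list \<Rightarrow> nat" where
  "max_st s = card {i. i < length s \<and> s ! i = i}"

definition rmin :: "nat list \<Rightarrow> nat" where
  "rmin s = card {i. i < length s \<and> (\<forall>j. i < j \<and> j < length s \<longrightarrow> s ! i < s ! j)}"

text \<open>ealm(s) = s_{max(s)+1} (1-indexed) = s ! max(s) (0-indexed).\<close>
definition ealm :: "nat list \<Rightarrow> nat" where
  "ealm s = s ! max_st s"

text \<open>F(t;x,y,w,u,z,v) as a formal power series in t, for given parameter values.\<close>
definition Fgf :: "'a::field \<Rightarrow> 'a \<Rightarrow> 'a \<Rightarrow> 'a \<Rightarrow> 'a \<Rightarrow> 'a \<Rightarrow> 'a fps" where
  "Fgf x y w u z v = Abs_fps (\<lambda>n.
     \<Sum>s\<in>{s. ascent_seq s \<and> length s = n \<and> max_st s < length s}.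
        x ^ rep s * y ^ max_st s * w ^ ealm s * u ^ asc s * z ^ zero_st s * v ^ rmin s)"

end

theory Submission
  imports Defs
begin

unbundle fps_syntax

type_synonym st = "nat \<times> int \<times> nat set \<times> nat set"

fun bnd :: "st \<Rightarrow> nat" where "bnd (B,l,V,S) = B"
fun stk :: "st \<Rightarrow> nat set" where "stk (B,l,V,S) = S"

fun stp :: "st \<Rightarrow> nat \<Rightarrow> st" where
 "stp (B,l,V,S) k = (if int k > l then Suc B else B, int k, insert k V, insert k {s\<in>S. s<k})"

fun wt :: "'a::field \<Rightarrow> 'a \<Rightarrow> 'a \<Rightarrow> st \<Rightarrow> nat \<Rightarrow> 'a" where
 "wt x u z (B,l,V,S) k = (if int k > l then u else 1) * (if k \<in> V then x else 1) * (if k = 0 then z else 1)"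

definition alw :: "(nat \<Rightarrow> bool) \<Rightarrow> st \<Rightarrow> nat set" where
 "alw P \<sigma> = {k. k \<le> bnd \<sigma> \<and> P k}"

lemma finite_alw[simp]: "finite (alw P \<sigma>)"
  unfolding alw_def by (rule finite_subset[of _ "{..bnd \<sigma>}"]) auto

fun Qc :: "'a::field \<Rightarrow> 'a \<Rightarrow> 'a \<Rightarrow> 'a \<Rightarrow> (nat \<Rightarrow> bool) \<Rightarrow> nat \<Rightarrow> st \<Rightarrow> 'a" where
 "Qc x u z v P 0 \<sigma> = v ^ card (stk \<sigma>)"
| "Qc x u z v P (Suc n) \<sigma> = (\<Sum>k\<in>alw P \<sigma>. wt x u z \<sigma> k * Qc x u z v P n (stp \<sigma> k))"

lemma Qc_sim_all:
  assumes R0: "\<And>\<sigma> \<tau>. R \<sigma> \<tau> \<Longrightarrow> card (stk \<sigma>) = card (stk \<tau>)"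
  and R1: "\<And>\<sigma> \<tau>. R \<sigma> \<tau> \<Longrightarrow> bij_betw (h \<sigma>) (alw P \<sigma>) (alw P' \<tau>)"
  and R2: "\<And>\<sigma> \<tau> k. R \<sigma> \<tau> \<Longrightarrow> k \<in> alw P \<sigma> \<Longrightarrow>
             wt x u z \<sigma> k = wt x' u' z' \<tau> (h \<sigma> k) \<and> R (stp \<sigma> k) (stp \<tau> (h \<sigma> k))"
  shows "\<forall>\<sigma> \<tau>. R \<sigma> \<tau> \<longrightarrow> Qc x u z v P n \<sigma> = Qc x' u' z' v P' n \<tau>"
proof (induction n)
  case 0 thus ?case using R0 by simp
next
  case (Suc n)
  show ?case
  proof (intro allI impI)
    fix \<sigma> \<tau> assume r: "R \<sigma> \<tau>"
    have "Qc x' u' z' v P' (Suc n) \<tau> = (\<Sum>k\<in>alw P \<sigma>. wt x' u' z' \<tau> (h \<sigma> k) * Qc x' u' z' v P' n (stp \<tau> (h \<sigma> k)))"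
      using sum.reindex_bij_betw[OF R1[OF r], of "\<lambda>j. wt x' u' z' \<tau> j * Qc x' u' z' v P' n (stp \<tau> j)"] by simp
    also have "\<dots> = Qc x u z v P (Suc n) \<sigma>"
    proof -
      have "\<And>k. k \<in> alw P \<sigma> \<Longrightarrow> wt x' u' z' \<tau> (h \<sigma> k) * Qc x' u' z' v P' n (stp \<tau> (h \<sigma> k))
            = wt x u z \<sigma> k * Qc x u z v P n (stp \<sigma> k)"
      proof -
        fix k assume k: "k \<in> alw P \<sigma>"
        from R2[OF r k] have a: "wt x u z \<sigma> k = wt x' u' z' \<tau> (h \<sigma> k)" and b: "R (stp \<sigma> k) (stp \<tau> (h \<sigma> k))" by auto
        from Suc.IH b have "Qc x u z v P n (stp \<sigma> k) = Qc x' u' z' v P' n (stp \<tau> (h \<sigma> k))" by blast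
        thus "wt x' u' z' \<tau> (h \<sigma> k) * Qc x' u' z' v P' n (stp \<tau> (h \<sigma> k))
            = wt x u z \<sigma> k * Qc x u z v P n (stp \<sigma> k)" using a by simp
      qed
      hence "(\<Sum>k\<in>alw P \<sigma>. wt x' u' z' \<tau> (h \<sigma> k) * Qc x' u' z' v P' n (stp \<tau> (h \<sigma> k)))
           = (\<Sum>k\<in>alw P \<sigma>. wt x u z \<sigma> k * Qc x u z v P n (stp \<sigma> k))" by (rule sum.cong[OF refl])
      thus ?thesis by (simp only: Qc.simps)
    qed
    finally show "Qc x u z v P (Suc n) \<sigma> = Qc x' u' z' v P' (Suc n) \<tau>" by simp
  qed
qed

lemma Qc_sim:
  assumes "\<And>\<sigma> \<tau>. R \<sigma> \<tau> \<Longrightarrow> card (stk \<sigma>) = card (stk \<tau>)"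
  and "\<And>\<sigma> \<tau>. R \<sigma> \<tau> \<Longrightarrow> bij_betw (h \<sigma>) (alw P \<sigma>) (alw P' \<tau>)"
  and "\<And>\<sigma> \<tau> k. R \<sigma> \<tau> \<Longrightarrow> k \<in> alw P \<sigma> \<Longrightarrow>
             wt x u z \<sigma> k = wt x' u' z' \<tau> (h \<sigma> k) \<and> R (stp \<sigma> k) (stp \<tau> (h \<sigma> k))"
  and "R \<sigma> \<tau>"
  shows "Qc x u z v P n \<sigma> = Qc x' u' z' v P' n \<tau>"
  using Qc_sim_all[of R h P P' x u z x' u' z' v n, OF assms(1-3)] assms(4) by blast

lemma Qc_stack_ins:
  assumes "finite S" "a \<notin> S"
  shows "Qc x u z v P n (B,l,V,insert a S) = Qc x u z v P n (B,l,V,S) + (v-1) * Qc x u z v (\<lambda>k. P k \<and> a < k) n (B,l,V,S)"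
  using assms
proof (induction n arbitrary: B l V S)
  case 0 thus ?case by (simp add: algebra_simps)
next
  case (Suc n)
  let ?Q = "Qc x u z v P n" and ?Q' = "Qc x u z v (\<lambda>k. P k \<and> a < k) n"
  have al: "alw P (B,l,V,insert a S) = alw P (B,l,V,S)" by (simp add: alw_def)
  have "Qc x u z v P (Suc n) (B,l,V,insert a S) =
     (\<Sum>k\<in>alw P (B,l,V,S). wt x u z (B,l,V,S) k * Qc x u z v P n (stp (B,l,V,insert a S) k))"
    by (simp only: Qc.simps al) simp
  also have "\<dots> = (\<Sum>k\<in>alw P (B,l,V,S). wt x u z (B,l,V,S) k * ?Q (stp (B,l,V,S) k)
        + (if a < k then (v-1) * (wt x u z (B,l,V,S) k * ?Q' (stp (B,l,V,S) k)) else 0))"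
  proof (rule sum.cong)
    fix k assume k: "k \<in> alw P (B,l,V,S)"
    show "wt x u z (B, l, V, S) k * Qc x u z v P n (stp (B, l, V, insert a S) k) =
      wt x u z (B,l,V,S) k * ?Q (stp (B,l,V,S) k)
        + (if a < k then (v-1) * (wt x u z (B,l,V,S) k * ?Q' (stp (B,l,V,S) k)) else 0)"
    proof (cases "a < k")
      case True
      have e: "insert k {s \<in> insert a S. s < k} = insert a (insert k {s \<in> S. s < k})" using True by auto
      have st: "stp (B,l,V,insert a S) k = (if int k > l then Suc B else B, int k, insert k V, insert a (insert k {s\<in>S. s<k}))"
        using e by (simp only: stp.simps)
      have st2: "stp (B,l,V,S) k = (if int k > l then Suc B else B, int k, insert k V, insert k {s\<in>S. s<k})"
        by (simp only: stp.simps)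
      have h: "Qc x u z v P n (stp (B, l, V, insert a S) k) = ?Q (stp (B,l,V,S) k) + (v-1) * ?Q' (stp (B,l,V,S) k)"
        unfolding st st2 by (rule Suc.IH) (use Suc.prems True in auto)
      show ?thesis unfolding h using True by (simp del: stp.simps add: algebra_simps)
    next
      case False
      have e: "insert k {s \<in> insert a S. s < k} = insert k {s \<in> S. s < k}" using False by auto
      have "stp (B,l,V,insert a S) k = stp (B,l,V,S) k" using e by (simp only: stp.simps)
      thus ?thesis using False by simp
    qed
  qed simp
  also have "\<dots> = (\<Sum>k\<in>alw P (B,l,V,S). wt x u z (B,l,V,S) k * ?Q (stp (B,l,V,S) k))
        + (\<Sum>k\<in>alw P (B,l,V,S). (if a < k then (v-1) * (wt x u z (B,l,V,S) k * ?Q' (stp (B,l,V,S) k)) else 0))"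
    by (rule sum.distrib)
  also have "\<dots> = Qc x u z v P (Suc n) (B,l,V,S) + (v-1) * Qc x u z v (\<lambda>k. P k \<and> a < k) (Suc n) (B,l,V,S)"
  proof -
    have "alw (\<lambda>k. P k \<and> a < k) (B,l,V,S) = {k \<in> alw P (B,l,V,S). a < k}" by (auto simp: alw_def)
    hence "(\<Sum>k\<in>alw P (B,l,V,S). (if a < k then (v-1) * (wt x u z (B,l,V,S) k * ?Q' (stp (B,l,V,S) k)) else 0))
       = (v-1) * Qc x u z v (\<lambda>k. P k \<and> a < k) (Suc n) (B,l,V,S)"
      by (simp only: sum.inter_filter[symmetric] sum_distrib_left Qc.simps finite_alw)
    thus ?thesis by (simp only: Qc.simps)
  qed
  finally show ?case by (simp only:)
qed

lemma Qc_stack_low_all: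
  assumes "\<forall>k. P k \<longrightarrow> c < k" "\<forall>s\<in>T. s \<le> c" "finite T"
  shows "\<forall>B l V S. finite S \<and> S \<inter> T = {} \<longrightarrow> Qc x u z v P n (B,l,V,S \<union> T) = v^card T * Qc x u z v P n (B,l,V,S)"
proof (induction n)
  case 0 show ?case using assms by (simp add: card_Un_disjoint power_add)
next
  case (Suc n)
  show ?case
  proof (intro allI impI)
    fix B :: nat and l :: int and V S :: "nat set" assume H: "finite S \<and> S \<inter> T = {}"
    have al: "alw P (B,l,V,S \<union> T) = alw P (B,l,V,S)" by (simp add: alw_def)
    have "\<And>k. k \<in> alw P (B,l,V,S) \<Longrightarrow> wt x u z (B,l,V,S \<union> T) k * Qc x u z v P n (stp (B,l,V,S \<union> T) k)
       = v^card T * (wt x u z (B,l,V,S) k * Qc x u z v P n (stp (B,l,V,S) k))"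
    proof -
      fix k assume k: "k \<in> alw P (B,l,V,S)"
      hence ck: "c < k" using assms(1) by (auto simp: alw_def)
      have e: "insert k {s \<in> S \<union> T. s < k} = insert k {s \<in> S. s < k} \<union> T" using ck assms(2) by force
      have st: "stp (B,l,V,S \<union> T) k = (if int k > l then Suc B else B, int k, insert k V, insert k {s \<in> S. s < k} \<union> T)"
        using e by (simp only: stp.simps)
      have st2: "stp (B,l,V,S) k = (if int k > l then Suc B else B, int k, insert k V, insert k {s \<in> S. s < k})"
        by (simp only: stp.simps)
      have d: "insert k {s \<in> S. s < k} \<inter> T = {}" using H ck assms(2) by auto
      have "Qc x u z v P n (stp (B,l,V,S \<union> T) k) = v^card T * Qc x u z v P n (stp (B,l,V,S) k)"
        unfolding st st2 by (rule Suc.IH[rule_format]) (use H d in simp)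
      thus "wt x u z (B,l,V,S \<union> T) k * Qc x u z v P n (stp (B,l,V,S \<union> T) k)
       = v^card T * (wt x u z (B,l,V,S) k * Qc x u z v P n (stp (B,l,V,S) k))" by (simp del: stp.simps)
    qed
    hence "(\<Sum>k\<in>alw P (B,l,V,S). wt x u z (B,l,V,S \<union> T) k * Qc x u z v P n (stp (B,l,V,S \<union> T) k))
       = (\<Sum>k\<in>alw P (B,l,V,S). v^card T * (wt x u z (B,l,V,S) k * Qc x u z v P n (stp (B,l,V,S) k)))"
      by (rule sum.cong[OF refl])
    thus "Qc x u z v P (Suc n) (B,l,V,S \<union> T) = v^card T * Qc x u z v P (Suc n) (B,l,V,S)"
      by (simp only: Qc.simps al sum_distrib_left)
  qed
qed

lemma Qc_stack_low:
  assumes "\<forall>k. P k \<longrightarrow> c < k" "\<forall>s\<in>T. s \<le> c" "finite T" "finite S" "S \<inter> T = {}"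
  shows "Qc x u z v P n (B,l,V,S \<union> T) = v^card T * Qc x u z v P n (B,l,V,S)"
  using Qc_stack_low_all[OF assms(1-3)] assms(4,5) by blast

lemma Qc_vd1_all:
  "\<forall>B l V S. g \<notin> V \<longrightarrow> x * Qc x u z v P n (B,l,V,S) = Qc x u z v P n (B,l,insert g V,S)
       - (1-x) * Qc x u z v (\<lambda>k. P k \<and> k \<noteq> g) n (B,l,insert g V,S)"
proof (induction n)
  case 0 show ?case by (simp add: algebra_simps)
next
  case (Suc n)
  show ?case
  proof (intro allI impI)
    fix B :: nat and l :: int and V S :: "nat set" assume gV: "g \<notin> V"
    let ?s = "(B,l,V,S)" and ?t = "(B,l,insert g V,S)"
    let ?Q = "Qc x u z v P n" and ?Q' = "Qc x u z v (\<lambda>k. P k \<and> k \<noteq> g) n"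
    have al: "alw P ?t = alw P ?s" by (simp add: alw_def)
    have "\<And>k. k \<in> alw P ?s \<Longrightarrow> x * (wt x u z ?s k * ?Q (stp ?s k))
       = wt x u z ?t k * ?Q (stp ?t k) - (if k \<noteq> g then (1-x) * (wt x u z ?t k * ?Q' (stp ?t k)) else 0)"
    proof -
      fix k assume k: "k \<in> alw P ?s"
      show "x * (wt x u z ?s k * ?Q (stp ?s k))
       = wt x u z ?t k * ?Q (stp ?t k) - (if k \<noteq> g then (1-x) * (wt x u z ?t k * ?Q' (stp ?t k)) else 0)"
      proof (cases "k = g")
        case True
        have "stp ?s k = stp ?t k" using True by simp
        moreover have "x * wt x u z ?s k = wt x u z ?t k" using True gV by simp
        ultimately show ?thesis using True by (simp del: stp.simps wt.simps)
      next
        case False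
        have w: "wt x u z ?s k = wt x u z ?t k" using False by simp
        have st: "stp ?t k = (if int k > l then Suc B else B, int k, insert g (insert k V), insert k {s \<in> S. s < k})"
          by (simp add: insert_commute)
        have st2: "stp ?s k = (if int k > l then Suc B else B, int k, insert k V, insert k {s \<in> S. s < k})"
          by simp
        have h: "x * ?Q (stp ?s k) = ?Q (stp ?t k) - (1-x) * ?Q' (stp ?t k)"
          unfolding st st2 by (rule Suc.IH[rule_format]) (use gV False in simp)
        have "x * (wt x u z ?s k * ?Q (stp ?s k)) = wt x u z ?t k * (x * ?Q (stp ?s k))"
          using w by (simp only: mult.left_commute)
        also have "\<dots> = wt x u z ?t k * (?Q (stp ?t k) - (1-x) * ?Q' (stp ?t k))" by (simp only: h)
        also have "\<dots> = wt x u z ?t k * ?Q (stp ?t k) - (if k \<noteq> g then (1-x) * (wt x u z ?t k * ?Q' (stp ?t k)) else 0)"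
          using False by (simp del: stp.simps wt.simps add: algebra_simps)
        finally show ?thesis .
      qed
    qed
    hence "(\<Sum>k\<in>alw P ?s. x * (wt x u z ?s k * ?Q (stp ?s k)))
       = (\<Sum>k\<in>alw P ?s. wt x u z ?t k * ?Q (stp ?t k) - (if k \<noteq> g then (1-x) * (wt x u z ?t k * ?Q' (stp ?t k)) else 0))"
      by (rule sum.cong[OF refl])
    also have "\<dots> = (\<Sum>k\<in>alw P ?s. wt x u z ?t k * ?Q (stp ?t k)) - (\<Sum>k\<in>alw P ?s. (if k \<noteq> g then (1-x) * (wt x u z ?t k * ?Q' (stp ?t k)) else 0))"
      by (rule sum_subtractf)
    also have "(\<Sum>k\<in>alw P ?s. (if k \<noteq> g then (1-x) * (wt x u z ?t k * ?Q' (stp ?t k)) else 0))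
        = (1-x) * Qc x u z v (\<lambda>k. P k \<and> k \<noteq> g) (Suc n) ?t"
    proof -
      have "alw (\<lambda>k. P k \<and> k \<noteq> g) ?t = {k \<in> alw P ?s. k \<noteq> g}" by (auto simp: alw_def)
      thus ?thesis by (simp only: sum.inter_filter[symmetric] sum_distrib_left Qc.simps finite_alw)
    qed
    finally show "x * Qc x u z v P (Suc n) ?s = Qc x u z v P (Suc n) ?t - (1-x) * Qc x u z v (\<lambda>k. P k \<and> k \<noteq> g) (Suc n) ?t"
      by (simp only: Qc.simps al sum_distrib_left)
  qed
qed

lemma Qc_vd1: "g \<notin> V \<Longrightarrow> x * Qc x u z v P n (B,l,V,S) = Qc x u z v P n (B,l,insert g V,S)
       - (1-x) * Qc x u z v (\<lambda>k. P k \<and> k \<noteq> g) n (B,l,insert g V,S)"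
  using Qc_vd1_all by blast

definition dn :: "nat \<Rightarrow> nat \<Rightarrow> nat" where "dn g k = (if g < k then k - 1 else k)"
definition dli :: "nat \<Rightarrow> int \<Rightarrow> int" where "dli g l = (if int g < l then l - 1 else l)"

lemma dn_inj: "a \<noteq> g \<Longrightarrow> b \<noteq> g \<Longrightarrow> dn g a = dn g b \<Longrightarrow> a = b"
  by (auto simp: dn_def split: if_splits)
lemma dn_less: "a \<noteq> g \<Longrightarrow> b \<noteq> g \<Longrightarrow> (dn g a < dn g b) = (a < b)"
  by (auto simp: dn_def split: if_splits)
lemma dn_lt_l: "k \<noteq> g \<Longrightarrow> int g \<noteq> l \<Longrightarrow> (dli g l < int (dn g k)) = (l < int k)"
  by (auto simp: dn_def dli_def split: if_splits)
lemma dli_int: "k \<noteq> g \<Longrightarrow> dli g (int k) = int (dn g k)"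
  by (auto simp: dn_def dli_def split: if_splits)
lemma dn_zero: "0 < g \<Longrightarrow> (dn g k = 0) = (k = 0)"
  by (auto simp: dn_def split: if_splits)
lemma dn_mem: "k \<noteq> g \<Longrightarrow> (dn g k \<in> dn g ` (V - {g})) = (k \<in> V)"
  using dn_inj by blast
lemma inj_dn: "g \<notin> S \<Longrightarrow> inj_on (dn g) S"
  using dn_inj by (metis inj_onI)
lemma dn_filter: "g \<notin> S \<Longrightarrow> k \<noteq> g \<Longrightarrow> dn g ` {s\<in>S. s<k} = {s \<in> dn g ` S. s < dn g k}"
proof (intro equalityI subsetI)
  assume a: "g \<notin> S" "k \<noteq> g"
  fix t assume "t \<in> dn g ` {s\<in>S. s<k}"
  then obtain s where s: "s \<in> S" "s < k" "t = dn g s" by blast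
  have "s \<noteq> g" using s a by blast
  hence "dn g s < dn g k" using dn_less[of s g k] a s by simp
  thus "t \<in> {s \<in> dn g ` S. s < dn g k}" using s by blast
next
  assume a: "g \<notin> S" "k \<noteq> g"
  fix t assume "t \<in> {s \<in> dn g ` S. s < dn g k}"
  then obtain s where s: "s \<in> S" "dn g s < dn g k" "t = dn g s" by blast
  have "s \<noteq> g" using s a by blast
  hence "s < k" using dn_less[of s g k] a s by simp
  thus "t \<in> dn g ` {s\<in>S. s<k}" using s by blast
qed
lemma dn_bij: "0 < g \<Longrightarrow> g \<le> B \<Longrightarrow> bij_betw (dn g) {k. k \<le> B \<and> k \<noteq> g} {k. k \<le> B - 1}"
proof (rule bij_betw_imageI)
  show "inj_on (dn g) {k. k \<le> B \<and> k \<noteq> g}" using dn_inj by (metis (mono_tags, lifting) inj_onI mem_Collect_eq)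
  assume a: "0 < g" "g \<le> B"
  show "dn g ` {k. k \<le> B \<and> k \<noteq> g} = {k. k \<le> B - 1}"
  proof
    show "dn g ` {k. k \<le> B \<and> k \<noteq> g} \<subseteq> {k. k \<le> B - 1}" using a by (auto simp: dn_def)
    show "{k. k \<le> B - 1} \<subseteq> dn g ` {k. k \<le> B \<and> k \<noteq> g}"
    proof
      fix k assume "k \<in> {k. k \<le> B - 1}"
      hence k: "k \<le> B - 1" by simp
      show "k \<in> dn g ` {k. k \<le> B \<and> k \<noteq> g}"
      proof (cases "k < g")
        case True thus ?thesis using a k by (intro image_eqI[of _ _ k]) (auto simp: dn_def)
      next
        case False thus ?thesis using a k by (intro image_eqI[of _ _ "Suc k"]) (auto simp: dn_def)
      qed
    qed
  qed
qed

lemma Qc_vd2: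
  assumes "0 < g" "g \<le> B" "int g \<noteq> l" "g \<notin> S" "g \<in> V" "finite S"
  shows "Qc x u z v (\<lambda>k. k \<noteq> g) n (B,l,V,S) = Qc x u z v (\<lambda>_. True) n (B - 1, dli g l, dn g ` (V - {g}), dn g ` S)"
proof (rule Qc_sim[where R = "\<lambda>\<sigma> \<tau>. \<exists>B l V S. \<sigma> = (B,l,V,S) \<and> 0 < g \<and> g \<le> B \<and> int g \<noteq> l \<and> g \<notin> S \<and> g \<in> V \<and> finite S
      \<and> \<tau> = (B - 1, dli g l, dn g ` (V - {g}), dn g ` S)" and h = "\<lambda>_. dn g"])
  fix \<sigma> \<tau> assume "\<exists>B l V S. \<sigma> = (B,l,V,S) \<and> 0 < g \<and> g \<le> B \<and> int g \<noteq> l \<and> g \<notin> S \<and> g \<in> V \<and> finite S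
      \<and> \<tau> = (B - 1, dli g l, dn g ` (V - {g}), dn g ` S)"
  then obtain B l V S where H: "\<sigma> = (B,l,V,S)" "0 < g" "g \<le> B" "int g \<noteq> l" "g \<notin> S" "g \<in> V" "finite S"
      "\<tau> = (B - 1, dli g l, dn g ` (V - {g}), dn g ` S)" by blast
  show "card (stk \<sigma>) = card (stk \<tau>)" using H by (simp add: card_image inj_dn)
  show "bij_betw (dn g) (alw (\<lambda>k. k \<noteq> g) \<sigma>) (alw (\<lambda>_. True) \<tau>)"
    using H dn_bij[of g B] by (simp add: alw_def)
  fix k assume k: "k \<in> alw (\<lambda>k. k \<noteq> g) \<sigma>"
  hence kg: "k \<noteq> g" "k \<le> B" using H by (auto simp: alw_def)
  show "wt x u z \<sigma> k = wt x u z \<tau> (dn g k) \<and>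
    (\<exists>B' l' V' S'. stp \<sigma> k = (B',l',V',S') \<and> 0 < g \<and> g \<le> B' \<and> int g \<noteq> l' \<and> g \<notin> S' \<and> g \<in> V' \<and> finite S'
      \<and> stp \<tau> (dn g k) = (B' - 1, dli g l', dn g ` (V' - {g}), dn g ` S'))"
  proof
    show "wt x u z \<sigma> k = wt x u z \<tau> (dn g k)"
      using H kg by (simp add: dn_lt_l dn_zero dn_mem)
    have B1: "1 \<le> B" using H by simp
    show "\<exists>B' l' V' S'. stp \<sigma> k = (B',l',V',S') \<and> 0 < g \<and> g \<le> B' \<and> int g \<noteq> l' \<and> g \<notin> S' \<and> g \<in> V' \<and> finite S'
      \<and> stp \<tau> (dn g k) = (B' - 1, dli g l', dn g ` (V' - {g}), dn g ` S')"
    proof (intro exI conjI)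
      show "stp \<sigma> k = (if int k > l then Suc B else B, int k, insert k V, insert k {s\<in>S. s<k})" using H by simp
      show "stp \<tau> (dn g k) = ((if int k > l then Suc B else B) - 1, dli g (int k), dn g ` (insert k V - {g}),
            dn g ` insert k {s\<in>S. s<k})"
        using H kg B1 by (auto simp: dn_lt_l dli_int dn_filter insert_Diff_if)
    qed (use H kg in auto)
  qed
qed (use assms in \<open>(intro exI conjI refl); simp\<close>)

definition dk :: "nat \<Rightarrow> nat \<Rightarrow> nat" where "dk c k = k - Suc c"

lemma dk_inj: "c < a \<Longrightarrow> c < b \<Longrightarrow> dk c a = dk c b \<Longrightarrow> a = b" by (simp add: dk_def)
lemma dk_less: "c < a \<Longrightarrow> c < b \<Longrightarrow> (dk c a < dk c b) = (a < b)" by (auto simp: dk_def)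
lemma dk_filter: "\<forall>s\<in>S. c < s \<Longrightarrow> c < k \<Longrightarrow> dk c ` {s\<in>S. s<k} = {s \<in> dk c ` S. s < dk c k}"
proof (intro equalityI subsetI)
  assume a: "\<forall>s\<in>S. c < s" "c < k"
  fix t assume "t \<in> dk c ` {s\<in>S. s<k}"
  then obtain s where s: "s \<in> S" "s < k" "t = dk c s" by blast
  hence "dk c s < dk c k" using dk_less[of c s k] a by simp
  thus "t \<in> {s \<in> dk c ` S. s < dk c k}" using s by blast
next
  assume a: "\<forall>s\<in>S. c < s" "c < k"
  fix t assume "t \<in> {s \<in> dk c ` S. s < dk c k}"
  then obtain s where s: "s \<in> S" "dk c s < dk c k" "t = dk c s" by blast
  hence "s < k" using dk_less[of c s k] a by simp
  thus "t \<in> dk c ` {s\<in>S. s<k}" using s by blast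
qed
lemma dk_bij: "c < B \<Longrightarrow> bij_betw (dk c) {k. k \<le> B \<and> c < k} {k. k \<le> B - Suc c}"
proof (rule bij_betw_imageI)
  show "inj_on (dk c) {k. k \<le> B \<and> c < k}" by (auto simp: inj_on_def dk_def)
  assume a: "c < B"
  show "dk c ` {k. k \<le> B \<and> c < k} = {k. k \<le> B - Suc c}"
  proof
    show "dk c ` {k. k \<le> B \<and> c < k} \<subseteq> {k. k \<le> B - Suc c}" using a by (auto simp: dk_def)
    show "{k. k \<le> B - Suc c} \<subseteq> dk c ` {k. k \<le> B \<and> c < k}"
    proof
      fix k assume "k \<in> {k. k \<le> B - Suc c}"
      thus "k \<in> dk c ` {k. k \<le> B \<and> c < k}" using a by (intro image_eqI[of _ _ "k + Suc c"]) (auto simp: dk_def)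
    qed
  qed
qed

lemma Qc_shift:
  assumes "c < B" "int c \<le> l" "\<forall>s\<in>S. c < s" "finite S"
  shows "Qc x u z v (\<lambda>k. c < k) n (B,l,V,S) = Qc x u 1 v (\<lambda>_. True) n (B - Suc c, l - int (Suc c), dk c ` {k\<in>V. c<k}, dk c ` S)"
proof (rule Qc_sim[where R = "\<lambda>\<sigma> \<tau>. \<exists>B l V S. \<sigma> = (B,l,V,S) \<and> c < B \<and> int c \<le> l \<and> (\<forall>s\<in>S. c < s) \<and> finite S
      \<and> \<tau> = (B - Suc c, l - int (Suc c), dk c ` {k\<in>V. c<k}, dk c ` S)" and h = "\<lambda>_. dk c"])
  fix \<sigma> \<tau> assume "\<exists>B l V S. \<sigma> = (B,l,V,S) \<and> c < B \<and> int c \<le> l \<and> (\<forall>s\<in>S. c < s) \<and> finite S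
      \<and> \<tau> = (B - Suc c, l - int (Suc c), dk c ` {k\<in>V. c<k}, dk c ` S)"
  then obtain B l V S where H: "\<sigma> = (B,l,V,S)" "c < B" "int c \<le> l" "\<forall>s\<in>S. c < s" "finite S"
      "\<tau> = (B - Suc c, l - int (Suc c), dk c ` {k\<in>V. c<k}, dk c ` S)" by blast
  have inj: "inj_on (dk c) S" unfolding inj_on_def using H(4) dk_inj by blast
  show "card (stk \<sigma>) = card (stk \<tau>)" using H inj by (simp add: card_image)
  show "bij_betw (dk c) (alw (\<lambda>k. c < k) \<sigma>) (alw (\<lambda>_. True) \<tau>)"
    using H dk_bij[of c B] by (simp add: alw_def)
  fix k assume k: "k \<in> alw (\<lambda>k. c < k) \<sigma>"
  hence kc: "c < k" "k \<le> B" using H by (auto simp: alw_def)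
  have mem: "(dk c k \<in> dk c ` {k\<in>V. c<k}) = (k \<in> V)" using kc dk_inj by blast
  have lt: "(l - int (Suc c) < int (dk c k)) = (l < int k)" using kc by (auto simp: dk_def)
  show "wt x u z \<sigma> k = wt x u 1 \<tau> (dk c k) \<and>
    (\<exists>B' l' V' S'. stp \<sigma> k = (B',l',V',S') \<and> c < B' \<and> int c \<le> l' \<and> (\<forall>s\<in>S'. c < s) \<and> finite S'
      \<and> stp \<tau> (dk c k) = (B' - Suc c, l' - int (Suc c), dk c ` {k\<in>V'. c<k}, dk c ` S'))"
  proof
    show "wt x u z \<sigma> k = wt x u 1 \<tau> (dk c k)" using H kc mem lt by simp
    show "\<exists>B' l' V' S'. stp \<sigma> k = (B',l',V',S') \<and> c < B' \<and> int c \<le> l' \<and> (\<forall>s\<in>S'. c < s) \<and> finite S'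
      \<and> stp \<tau> (dk c k) = (B' - Suc c, l' - int (Suc c), dk c ` {k\<in>V'. c<k}, dk c ` S')"
    proof (intro exI conjI)
      show "stp \<sigma> k = (if int k > l then Suc B else B, int k, insert k V, insert k {s\<in>S. s<k})" using H by simp
      have i: "int (dk c k) = int k - int (Suc c)" using kc by (simp add: dk_def)
      have e1: "{k'\<in>insert k V. c<k'} = insert k {k\<in>V. c<k}" using kc by auto
      show "stp \<tau> (dk c k) = ((if int k > l then Suc B else B) - Suc c, int k - int (Suc c), dk c ` {k'\<in>insert k V. c<k'},
            dk c ` insert k {s\<in>S. s<k})"
      proof -
        have "stp \<tau> (dk c k) = (if l < int k then Suc (B - Suc c) else B - Suc c, int k - int (Suc c),
            insert (dk c k) (dk c ` {k\<in>V. c<k}), insert (dk c k) {s \<in> dk c ` S. s < dk c k})"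
          using H(6) lt i by (simp only: stp.simps)
        also have "\<dots> = ((if int k > l then Suc B else B) - Suc c, int k - int (Suc c), dk c ` {k'\<in>insert k V. c<k'},
            dk c ` insert k {s\<in>S. s<k})"
          unfolding e1 image_insert dk_filter[OF H(4) kc(1), symmetric] using H(2) by (simp add: Suc_diff_Suc)
        finally show ?thesis .
      qed
    qed (use H kc in simp_all)
  qed
qed (use assms in \<open>(intro exI conjI refl); simp\<close>)

definition qf :: "'a::field \<Rightarrow> 'a \<Rightarrow> 'a \<Rightarrow> 'a \<Rightarrow> (nat \<Rightarrow> bool) \<Rightarrow> st \<Rightarrow> 'a fps" where
  "qf x u z v P \<sigma> = Abs_fps (\<lambda>n. Qc x u z v P n \<sigma>)"


lemma qf_step: "qf x u z v P \<sigma> = fps_const (v ^ card (stk \<sigma>))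
   + fps_X * (\<Sum>k\<in>alw P \<sigma>. fps_const (wt x u z \<sigma> k) * qf x u z v P (stp \<sigma> k))"
proof (rule fps_ext)
  fix n show "qf x u z v P \<sigma> $ n = (fps_const (v ^ card (stk \<sigma>))
   + fps_X * (\<Sum>k\<in>alw P \<sigma>. fps_const (wt x u z \<sigma> k) * qf x u z v P (stp \<sigma> k))) $ n"
  proof (cases n)
    case 0 thus ?thesis by (simp add: qf_def fps_X_mult_nth)
  next
    case (Suc m) thus ?thesis by (simp add: qf_def fps_X_mult_nth fps_sum_nth)
  qed
qed

lemma qf_eqI: "(\<And>n. Qc x u z v P n \<sigma> = Qc x' u' z' v' P' n \<tau>) \<Longrightarrow> qf x u z v P \<sigma> = qf x' u' z' v' P' \<tau>"
  by (simp add: qf_def)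

definition pst :: "nat \<Rightarrow> int \<Rightarrow> st" where "pst B l = (B, l, {..<B}, {k. int k \<le> l})"

lemma pst_nat: "pst B (int j) = (B, int j, {..<B}, {..j})" by (auto simp: pst_def)
lemma pst_pred: "pst B (int j - 1) = (B, int j - 1, {..<B}, {..<j})" by (auto simp: pst_def)
lemma pst_m1: "pst B (-1) = (B, -1, {..<B}, {})" by (auto simp: pst_def)

abbreviation qq :: "'a::field \<Rightarrow> 'a \<Rightarrow> 'a \<Rightarrow> 'a \<Rightarrow> nat \<Rightarrow> int \<Rightarrow> 'a fps" where
  "qq x u z v B l \<equiv> qf x u z v (\<lambda>_. True) (pst B l)"

lemma R3:
  shows "qq x u z v (Suc A) (int A) = fps_const (v^Suc A) + fps_X * ((\<Sum>k<Suc A. fps_const (x * (if k = 0 then z else 1)) * qq x u z v (Suc A) (int k))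
     + fps_const u * qq x u z v (Suc (Suc A)) (int (Suc A)))"
proof -
  have al: "alw (\<lambda>_. True) (pst (Suc A) (int A)) = insert (Suc A) {..<Suc A}" by (auto simp: alw_def pst_def)
  have c: "card (stk (pst (Suc A) (int A))) = Suc A" by (simp add: pst_nat)
  have wB: "wt x u z (pst (Suc A) (int A)) (Suc A) = u" by (simp add: pst_nat)
  have sB: "stp (pst (Suc A) (int A)) (Suc A) = pst (Suc (Suc A)) (int (Suc A))"
    by (simp only: pst_nat stp.simps) (auto simp: lessThan_Suc atMost_Suc)
  have wk: "\<And>k. k < Suc A \<Longrightarrow> wt x u z (pst (Suc A) (int A)) k = x * (if k = 0 then z else 1)" by (simp add: pst_nat)
  have sk: "\<And>k. k < Suc A \<Longrightarrow> stp (pst (Suc A) (int A)) k = pst (Suc A) (int k)"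
    by (simp only: pst_nat stp.simps) (auto simp: insert_absorb)
  have "qq x u z v (Suc A) (int A) = fps_const (v^Suc A) + fps_X * (fps_const u * qq x u z v (Suc (Suc A)) (int (Suc A))
     + (\<Sum>k<Suc A. fps_const (wt x u z (pst (Suc A) (int A)) k) * qf x u z v (\<lambda>_. True) (stp (pst (Suc A) (int A)) k)))"
    by (subst qf_step) (simp only: al c sum.insert finite_lessThan lessThan_iff less_irrefl not_False_eq_True wB sB)
  also have "(\<Sum>k<Suc A. fps_const (wt x u z (pst (Suc A) (int A)) k) * qf x u z v (\<lambda>_. True) (stp (pst (Suc A) (int A)) k))
     = (\<Sum>k<Suc A. fps_const (x * (if k = 0 then z else 1)) * qq x u z v (Suc A) (int k))"
    by (rule sum.cong) (simp_all only: wk sk lessThan_iff)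
  finally show ?thesis by (simp only: add.commute)
qed

lemma R4: "qq x u z v 0 (-1) = 1 + fps_X * fps_const (u * z) * qq x u z v 1 0"
proof -
  have al: "alw (\<lambda>_. True) (pst 0 (-1)) = {0}" by (auto simp: alw_def pst_def)
  have s: "stp (pst 0 (-1)) 0 = pst 1 0" by (auto simp: pst_def)
  show ?thesis
    apply (subst qf_step)
    unfolding al using s by (simp add: pst_m1 algebra_simps)
qed

lemma R2: assumes "j < B"
  shows "qf x u z v (\<lambda>k. j < k) (B, int j, {..<B}, {..<j}) = fps_const (v^j) * qq x u 1 v (B - Suc j) (-1)"
proof (rule fps_ext)
  fix n
  have e: "{..<j} = {} \<union> {..<j}" by simp
  have "Qc x u z v (\<lambda>k. j < k) n (B, int j, {..<B}, {} \<union> {..<j}) = v^card {..<j} * Qc x u z v (\<lambda>k. j < k) n (B, int j, {..<B}, {})"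
    by (rule Qc_stack_low[where c = j]) auto
  also have "Qc x u z v (\<lambda>k. j < k) n (B, int j, {..<B}, {}) = Qc x u 1 v (\<lambda>_. True) n (B - Suc j, int j - int (Suc j), dk j ` {k\<in>{..<B}. j<k}, dk j ` {})"
    by (rule Qc_shift) (use assms in auto)
  also have "dk j ` {k\<in>{..<B}. j<k} = {..<B - Suc j}"
  proof (intro equalityI subsetI)
    fix k assume "k \<in> dk j ` {k\<in>{..<B}. j<k}" thus "k \<in> {..<B - Suc j}" by (auto simp: dk_def)
  next
    fix k assume "k \<in> {..<B - Suc j}" thus "k \<in> dk j ` {k\<in>{..<B}. j<k}"
      by (intro image_eqI[of _ _ "k + Suc j"]) (auto simp: dk_def)
  qed
  finally have "Qc x u z v (\<lambda>k. j < k) n (B, int j, {..<B}, {..<j}) = v^j * Qc x u 1 v (\<lambda>_. True) n (pst (B - Suc j) (-1))"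
    by (simp add: pst_m1)
  thus "qf x u z v (\<lambda>k. j < k) (B, int j, {..<B}, {..<j}) $ n = (fps_const (v^j) * qq x u 1 v (B - Suc j) (-1)) $ n"
    by (simp add: qf_def)
qed

lemma R1a: "qq x u z v B (int j) = qf x u z v (\<lambda>_. True) (B, int j, {..<B}, {..<j})
   + fps_const (v - 1) * qf x u z v (\<lambda>k. j < k) (B, int j, {..<B}, {..<j})"
proof (rule fps_ext)
  fix n
  have "Qc x u z v (\<lambda>_. True) n (B, int j, {..<B}, insert j {..<j}) = Qc x u z v (\<lambda>_. True) n (B, int j, {..<B}, {..<j})
    + (v-1) * Qc x u z v (\<lambda>k. True \<and> j < k) n (B, int j, {..<B}, {..<j})"
    by (rule Qc_stack_ins) auto
  moreover have "insert j {..<j} = {..j}" by auto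
  ultimately show "qq x u z v B (int j) $ n = (qf x u z v (\<lambda>_. True) (B, int j, {..<B}, {..<j})
   + fps_const (v - 1) * qf x u z v (\<lambda>k. j < k) (B, int j, {..<B}, {..<j})) $ n"
    by (simp add: qf_def pst_nat)
qed

lemma R1b: assumes "j < B"
  shows "qf x u z v (\<lambda>_. True) (B, int j, {..<B}, {..<j}) = qq x u z v B (int j - 1)
    + fps_X * (fps_const x * fps_const (if j = 0 then z else 1) * qq x u z v B (int j)
       - fps_const u * fps_const x * fps_const (if j = 0 then z else 1) * qf x u z v (\<lambda>_. True) (Suc B, int j, {..<B}, {..j}))"
proof -
  let ?t = "(B, int j, {..<B}, {..<j})" and ?r = "pst B (int j - 1)"
  let ?T = "\<lambda>_. True"
  have r: "?r = (B, int j - 1, {..<B}, {..<j})" by (rule pst_pred)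
  have al1: "alw ?T ?t = {..B}" by (auto simp: alw_def)
  have al2: "alw ?T ?r = {..B}" by (auto simp: alw_def pst_def)
  have c1: "card (stk ?t) = j" by simp
  have c2: "card (stk ?r) = j" by (simp add: r)
  have lin: "j \<in> {..B}" using assms by simp
  let ?f = "\<lambda>\<sigma> k. fps_const (wt x u z \<sigma> k) * qf x u z v ?T (stp \<sigma> k)"
  have s1: "sum (?f ?t) {..B} = ?f ?t j + sum (?f ?t) ({..B} - {j})" by (rule sum.remove[OF _ lin]) simp
  have s2: "sum (?f ?r) {..B} = ?f ?r j + sum (?f ?r) ({..B} - {j})" by (rule sum.remove[OF _ lin]) simp
  have s3: "sum (?f ?t) ({..B} - {j}) = sum (?f ?r) ({..B} - {j})"
  proof (rule sum.cong[OF refl])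
    fix k assume "k \<in> {..B} - {j}"
    hence k: "k \<noteq> j" by simp
    have a: "(int j < int k) = (int j - 1 < int k)" using k by auto
    have "wt x u z ?t k = wt x u z ?r k" unfolding r using a by simp
    moreover have "stp ?t k = stp ?r k" unfolding r using a by simp
    ultimately show "?f ?t k = ?f ?r k" by simp
  qed
  have w1: "wt x u z ?t j = x * (if j = 0 then z else 1)" using assms by simp
  have st1: "stp ?t j = pst B (int j)" using assms by (auto simp: pst_nat)
  have w2: "wt x u z ?r j = u * x * (if j = 0 then z else 1)" using assms unfolding r by simp
  have st2: "stp ?r j = (Suc B, int j, {..<B}, {..j})" using assms unfolding r by auto
  have "qf x u z v ?T ?t = fps_const (v^j) + fps_X * (?f ?t j + sum (?f ?r) ({..B} - {j}))"
    by (subst qf_step) (simp only: al1 c1 s1 s3)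
  moreover have "qf x u z v ?T ?r = fps_const (v^j) + fps_X * (?f ?r j + sum (?f ?r) ({..B} - {j}))"
    by (subst qf_step) (simp only: al2 c2 s2)
  ultimately show ?thesis unfolding w1 st1 w2 st2 by (simp add: algebra_simps)
qed

lemma R1c: assumes "j < B"
  shows "fps_const x * qf x u z v (\<lambda>_. True) (Suc B, int j, {..<B}, {..j}) = qq x u z v (Suc B) (int j) - fps_const (1 - x) * qq x u z v B (int j)"
proof (rule fps_ext)
  fix n
  have "x * Qc x u z v (\<lambda>_. True) n (Suc B, int j, {..<B}, {..j}) = Qc x u z v (\<lambda>_. True) n (Suc B, int j, insert B {..<B}, {..j})
    - (1-x) * Qc x u z v (\<lambda>k. True \<and> k \<noteq> B) n (Suc B, int j, insert B {..<B}, {..j})"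
    by (rule Qc_vd1) simp
  also have "insert B {..<B} = {..<Suc B}" by auto
  also have "Qc x u z v (\<lambda>k. True \<and> k \<noteq> B) n (Suc B, int j, {..<Suc B}, {..j})
     = Qc x u z v (\<lambda>_. True) n (Suc B - 1, dli B (int j), dn B ` ({..<Suc B} - {B}), dn B ` {..j})"
    using Qc_vd2[of B "Suc B" "int j" "{..j}" "{..<Suc B}" x u z v n] assms by simp
  also have "dli B (int j) = int j" using assms by (simp add: dli_def)
  also have "dn B ` ({..<Suc B} - {B}) = {..<B}"
  proof -
    have "{..<Suc B} - {B} = {..<B}" by auto
    moreover have "dn B ` {..<B} = {..<B}" by (rule image_cong[where g = id, simplified]) (auto simp: dn_def)
    ultimately show ?thesis by simp
  qed
  also have "dn B ` {..j} = {..j}" using assms by (intro image_cong[where g = id, simplified]) (auto simp: dn_def)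
  finally show "(fps_const x * qf x u z v (\<lambda>_. True) (Suc B, int j, {..<B}, {..j})) $ n = (qq x u z v (Suc B) (int j) - fps_const (1 - x) * qq x u z v B (int j)) $ n"
    by (simp add: qf_def pst_nat)
qed

lemma R1: assumes "j < B"
  shows "qq x u z v B (int j) = qq x u z v B (int j - 1)
   + fps_X * fps_const (if j = 0 then z else 1) * (fps_const x * qq x u z v B (int j) - fps_const u * qq x u z v (Suc B) (int j)
       + fps_const (u * (1 - x)) * qq x u z v B (int j))
   + fps_const (v - 1) * qf x u z v (\<lambda>k. j < k) (B, int j, {..<B}, {..<j})"
proof -
  let ?R = "qf x u z v (\<lambda>_. True) (Suc B, int j, {..<B}, {..j})"
  have c: "fps_const x * ?R = qq x u z v (Suc B) (int j) - fps_const (1 - x) * qq x u z v B (int j)" by (rule R1c[OF assms])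
  have gen: "\<And>(qa::'a fps) T D P R Q1 X cx cz cu c1x. qa = T + D \<Longrightarrow> T = P + X*(cx*cz*qa - cu*cx*cz*R)
     \<Longrightarrow> cx*R = Q1 - c1x*qa \<Longrightarrow> qa = P + X*cz*(cx*qa - cu*Q1 + cu*c1x*qa) + D" by algebra
  have "qq x u z v B (int j) = qq x u z v B (int j - 1)
   + fps_X * fps_const (if j = 0 then z else 1) * (fps_const x * qq x u z v B (int j) - fps_const u * qq x u z v (Suc B) (int j)
       + fps_const u * fps_const (1 - x) * qq x u z v B (int j))
   + fps_const (v - 1) * qf x u z v (\<lambda>k. j < k) (B, int j, {..<B}, {..<j})"
    by (rule gen[OF R1a R1b[OF assms] c])
  thus ?thesis by (simp only: fps_const_mult)
qed

lemma asc_take: "i \<le> length s \<Longrightarrow> asc (take i s) = card {j. Suc j < i \<and> s!j < s!Suc j}"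
  unfolding asc_def by (rule arg_cong[where f = card]) auto

lemma asc_le: "asc s \<le> length s - 1"
proof -
  have "{i. Suc i < length s \<and> s!i < s!Suc i} \<subseteq> {..<length s - 1}" by auto
  hence "asc s \<le> card {..<length s - 1}" unfolding asc_def by (rule card_mono[rotated]) simp
  thus ?thesis by simp
qed

lemma asc_snoc: "s \<noteq> [] \<Longrightarrow> asc (s@[k]) = asc s + (if last s < k then 1 else 0)"
proof -
  assume ne: "s \<noteq> []"
  let ?A = "{i. Suc i < length s \<and> s!i < s!Suc i}"
  have e: "{i. Suc i < length (s@[k]) \<and> (s@[k])!i < (s@[k])!Suc i} = ?A \<union> (if last s < k then {length s - 1} else {})"
  proof (intro equalityI subsetI)
    fix i assume "i \<in> {i. Suc i < length (s@[k]) \<and> (s@[k])!i < (s@[k])!Suc i}"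
    hence i: "Suc i < Suc (length s)" "(s@[k])!i < (s@[k])!Suc i" by auto
    show "i \<in> ?A \<union> (if last s < k then {length s - 1} else {})"
    proof (cases "Suc i < length s")
      case True thus ?thesis using i by (auto simp: nth_append)
    next
      case False
      hence "i = length s - 1" using i by auto
      thus ?thesis using i ne by (auto simp: nth_append last_conv_nth)
    qed
  next
    fix i assume "i \<in> ?A \<union> (if last s < k then {length s - 1} else {})"
    thus "i \<in> {i. Suc i < length (s@[k]) \<and> (s@[k])!i < (s@[k])!Suc i}"
      using ne by (auto simp: nth_append last_conv_nth split: if_splits)
  qed
  have fin: "finite ?A" by (rule finite_subset[of _ "{..<length s}"]) auto
  have "length s - 1 \<notin> ?A" by auto
  thus ?thesis unfolding asc_def e using fin by (auto simp: card_insert_if)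
qed

lemma ascent_seq_snoc: "s \<noteq> [] \<Longrightarrow> ascent_seq (s@[k]) = (ascent_seq s \<and> k \<le> asc s + 1)"
proof -
  assume ne: "s \<noteq> []"
  have a: "\<And>i. i < length s \<Longrightarrow> (s@[k])!i = s!i \<and> take i (s@[k]) = take i s" by (simp add: nth_append)
  show ?thesis
  proof
    assume H: "ascent_seq (s@[k])"
    have "s!0 = 0" using H ne a[of 0] unfolding ascent_seq_def by auto
    moreover have "\<forall>i. 1 \<le> i \<and> i < length s \<longrightarrow> s!i \<le> asc (take i s) + 1"
    proof (intro allI impI)
      fix i assume i: "1 \<le> i \<and> i < length s"
      hence "(s@[k])!i \<le> asc (take i (s@[k])) + 1" using H unfolding ascent_seq_def by simp
      thus "s!i \<le> asc (take i s) + 1" using a[of i] i by simp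
    qed
    moreover have "k \<le> asc s + 1"
    proof -
      have "1 \<le> length s" using ne by (simp add: Suc_le_eq)
      moreover have "length s < length (s@[k])" by simp
      ultimately have "(s@[k])!length s \<le> asc (take (length s) (s@[k])) + 1" using H unfolding ascent_seq_def by blast
      thus ?thesis by simp
    qed
    ultimately show "ascent_seq s \<and> k \<le> asc s + 1" using ne unfolding ascent_seq_def by auto
  next
    assume H: "ascent_seq s \<and> k \<le> asc s + 1"
    show "ascent_seq (s@[k])" unfolding ascent_seq_def
    proof (intro conjI allI impI)
      show "s @ [k] \<noteq> []" by simp
      show "(s@[k])!0 = 0" using H ne a[of 0] unfolding ascent_seq_def by auto
      fix i assume i: "1 \<le> i \<and> i < length (s@[k])"
      show "(s@[k])!i \<le> asc (take i (s@[k])) + 1"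
      proof (cases "i < length s")
        case True thus ?thesis using H i a[of i] unfolding ascent_seq_def by auto
      next
        case False hence "i = length s" using i by simp
        thus ?thesis using H by simp
      qed
    qed
  qed
qed

lemma zero_snoc: "zero_st (s@[k]) = zero_st s + (if k = 0 then 1 else 0)"
proof -
  let ?A = "{i. i < length s \<and> s!i = 0}"
  have e: "{i. i < length (s@[k]) \<and> (s@[k])!i = 0} = ?A \<union> (if k = 0 then {length s} else {})"
    by (auto simp: nth_append less_Suc_eq)
  have fin: "finite ?A" by (rule finite_subset[of _ "{..<length s}"]) auto
  show ?thesis unfolding zero_st_def e using fin by (auto simp: card_insert_if)
qed

lemma rep_snoc: "rep (s@[k]) = rep s + (if k \<in> set s then 1 else 0)"
proof -
  have "card (set s) \<le> length s" by (rule card_length)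
  thus ?thesis unfolding rep_def by (auto simp: card_insert_if)
qed

definition rms :: "nat list \<Rightarrow> nat set" where
  "rms s = {i. i < length s \<and> (\<forall>j. i < j \<and> j < length s \<longrightarrow> s!i < s!j)}"
definition rv :: "nat list \<Rightarrow> nat set" where "rv s = (\<lambda>i. s!i) ` rms s"

lemma rmin_rms: "rmin s = card (rms s)" by (simp add: rmin_def rms_def)

lemma rms_fin: "finite (rms s)" unfolding rms_def by (rule finite_subset[of _ "{..<length s}"]) auto

lemma rms_inj: "inj_on (\<lambda>i. s!i) (rms s)"
proof (rule inj_onI)
  fix i j assume "i \<in> rms s" "j \<in> rms s" "s!i = s!j"
  thus "i = j" unfolding rms_def by (cases i j rule: linorder_cases) auto
qed

lemma card_rv: "card (rv s) = rmin s" unfolding rv_def rmin_rms by (rule card_image[OF rms_inj])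

lemma rms_snoc: "rms (s@[k]) = insert (length s) {i \<in> rms s. s!i < k}"
proof (intro equalityI subsetI)
  fix i assume "i \<in> rms (s@[k])"
  hence i: "i < Suc (length s)" "\<forall>j. i < j \<and> j < Suc (length s) \<longrightarrow> (s@[k])!i < (s@[k])!j" unfolding rms_def by auto
  show "i \<in> insert (length s) {i \<in> rms s. s!i < k}"
  proof (cases "i = length s")
    case False
    hence il: "i < length s" using i by simp
    have "\<forall>j. i < j \<and> j < length s \<longrightarrow> s!i < s!j"
    proof (intro allI impI)
      fix j assume j: "i < j \<and> j < length s"
      hence "(s@[k])!i < (s@[k])!j" using i(2) by simp
      thus "s!i < s!j" using j il by (simp add: nth_append)
    qed
    moreover have "s!i < k" using i(2)[rule_format, of "length s"] il by (simp add: nth_append)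
    ultimately show ?thesis using il unfolding rms_def by auto
  qed simp
next
  fix i assume "i \<in> insert (length s) {i \<in> rms s. s!i < k}"
  thus "i \<in> rms (s@[k])" unfolding rms_def by (auto simp: nth_append less_Suc_eq)
qed

lemma rv_snoc: "rv (s@[k]) = insert k {a \<in> rv s. a < k}"
proof -
  have "rv (s@[k]) = (\<lambda>i. (s@[k])!i) ` insert (length s) {i \<in> rms s. s!i < k}" unfolding rv_def rms_snoc ..
  also have "\<dots> = insert k ((\<lambda>i. s!i) ` {i \<in> rms s. s!i < k})"
  proof -
    have "\<And>i. i \<in> rms s \<Longrightarrow> (s@[k])!i = s!i" unfolding rms_def by (simp add: nth_append)
    hence "(\<lambda>i. (s@[k])!i) ` {i \<in> rms s. s!i < k} = (\<lambda>i. s!i) ` {i \<in> rms s. s!i < k}" by (intro image_cong) auto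
    thus ?thesis by simp
  qed
  also have "(\<lambda>i. s!i) ` {i \<in> rms s. s!i < k} = {a \<in> rv s. a < k}" unfolding rv_def by auto
  finally show ?thesis .
qed

definition stof :: "nat list \<Rightarrow> st" where
  "stof s = (Suc (asc s), int (last s), set s, rv s)"

lemma stof_snoc: "s \<noteq> [] \<Longrightarrow> stof (s@[k]) = stp (stof s) k"
  by (simp add: stof_def asc_snoc rv_snoc)

definition W' :: "'a::field \<Rightarrow> 'a \<Rightarrow> 'a \<Rightarrow> nat list \<Rightarrow> 'a" where
  "W' x u z s = x ^ rep s * u ^ asc s * z ^ zero_st s"

lemma W'_snoc: "s \<noteq> [] \<Longrightarrow> W' x u z (s@[k]) = W' x u z s * wt x u z (stof s) k"
  by (simp add: W'_def stof_def asc_snoc rep_snoc zero_snoc power_add)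

lemma asc_seq_nth_le: "ascent_seq s \<Longrightarrow> i < length s \<Longrightarrow> s!i \<le> i"
proof (cases "i = 0")
  case True thus "ascent_seq s \<Longrightarrow> i < length s \<Longrightarrow> s!i \<le> i" by (simp add: ascent_seq_def)
next
  case False
  assume H: "ascent_seq s" "i < length s"
  hence "s!i \<le> asc (take i s) + 1" using False unfolding ascent_seq_def by auto
  moreover have "asc (take i s) \<le> i - 1" using asc_le[of "take i s"] H by simp
  ultimately show ?thesis using False by simp
qed

definition Ext :: "nat list \<Rightarrow> nat \<Rightarrow> nat list set" where
  "Ext p n = {s. ascent_seq s \<and> length s = length p + n \<and> take (length p) s = p}"

lemma Ext_fin: "finite (Ext p n)"
proof (rule finite_subset)
  show "Ext p n \<subseteq> {s. set s \<subseteq> {..length p + n} \<and> length s = length p + n}"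
  proof
    fix s assume "s \<in> Ext p n"
    hence s: "ascent_seq s" "length s = length p + n" by (auto simp: Ext_def)
    have "\<And>a. a \<in> set s \<Longrightarrow> a \<le> length p + n"
    proof -
      fix a assume "a \<in> set s"
      then obtain i where "i < length s" "s!i = a" by (auto simp: in_set_conv_nth)
      thus "a \<le> length p + n" using asc_seq_nth_le[OF s(1)] s(2) by fastforce
    qed
    thus "s \<in> {s. set s \<subseteq> {..length p + n} \<and> length s = length p + n}" using s by auto
  qed
  show "finite {s. set s \<subseteq> {..length p + n} \<and> length s = length p + n}" by (rule finite_lists_length_eq) simp
qed

lemma Ext_0: "ascent_seq p \<Longrightarrow> Ext p 0 = {p}"
  by (auto simp: Ext_def)

lemma Ext_Suc: assumes "ascent_seq p"
  shows "Ext p (Suc n) = (\<Union>k\<in>{..Suc (asc p)}. Ext (p@[k]) n)"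
proof (intro equalityI subsetI)
  have ne: "p \<noteq> []" using assms by (simp add: ascent_seq_def)
  fix s assume "s \<in> Ext p (Suc n)"
  hence s: "ascent_seq s" "length s = length p + Suc n" "take (length p) s = p" by (auto simp: Ext_def)
  have t: "take (Suc (length p)) s = p @ [s ! length p]" using s by (simp add: take_Suc_conv_app_nth)
  have lp: "1 \<le> length p \<and> length p < length s" using ne s(2) by (simp add: Suc_le_eq)
  have "s ! length p \<le> asc (take (length p) s) + 1" using s(1) lp unfolding ascent_seq_def by blast
  hence "s ! length p \<in> {..Suc (asc p)}" using s(3) by simp
  moreover have "s \<in> Ext (p@[s ! length p]) n" using s t by (simp add: Ext_def)
  ultimately show "s \<in> (\<Union>k\<in>{..Suc (asc p)}. Ext (p@[k]) n)" by blast
next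
  fix s assume "s \<in> (\<Union>k\<in>{..Suc (asc p)}. Ext (p@[k]) n)"
  then obtain k where s: "ascent_seq s" "length s = Suc (length p) + n" "take (Suc (length p)) s = p@[k]"
    by (auto simp: Ext_def)
  have "take (length p) s = take (length p) (take (Suc (length p)) s)" by simp
  also have "\<dots> = p" using s(3) by simp
  finally show "s \<in> Ext p (Suc n)" using s by (simp add: Ext_def)
qed

lemma link: "ascent_seq p \<Longrightarrow>
   (\<Sum>s\<in>Ext p n. x ^ rep s * u ^ asc s * z ^ zero_st s * v ^ rmin s) = W' x u z p * Qc x u z v (\<lambda>_. True) n (stof p)"
proof (induction n arbitrary: p)
  case 0
  show ?case using 0 by (simp add: Ext_0 W'_def stof_def card_rv)
next
  case (Suc n)
  have ne: "p \<noteq> []" using Suc.prems by (simp add: ascent_seq_def)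
  let ?f = "\<lambda>s. x ^ rep s * u ^ asc s * z ^ zero_st s * v ^ rmin s"
  have disj: "\<forall>i\<in>{..Suc (asc p)}. \<forall>j\<in>{..Suc (asc p)}. i \<noteq> j \<longrightarrow> Ext (p@[i]) n \<inter> Ext (p@[j]) n = {}"
  proof (intro ballI impI)
    fix i j :: nat assume "i \<noteq> j"
    show "Ext (p@[i]) n \<inter> Ext (p@[j]) n = {}"
    proof (rule ccontr)
      assume "Ext (p@[i]) n \<inter> Ext (p@[j]) n \<noteq> {}"
      then obtain s where "take (Suc (length p)) s = p@[i]" "take (Suc (length p)) s = p@[j]" by (auto simp: Ext_def)
      thus False using \<open>i \<noteq> j\<close> by simp
    qed
  qed
  have "(\<Sum>s\<in>Ext p (Suc n). ?f s) = (\<Sum>k\<in>{..Suc (asc p)}. \<Sum>s\<in>Ext (p@[k]) n. ?f s)"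
    unfolding Ext_Suc[OF Suc.prems] by (rule sum.UNION_disjoint) (simp_all add: Ext_fin disj)
  also have "\<dots> = (\<Sum>k\<in>{..Suc (asc p)}. W' x u z (p@[k]) * Qc x u z v (\<lambda>_. True) n (stof (p@[k])))"
  proof (rule sum.cong[OF refl])
    fix k assume "k \<in> {..Suc (asc p)}"
    hence "ascent_seq (p@[k])" using Suc.prems ne by (simp add: ascent_seq_snoc)
    thus "(\<Sum>s\<in>Ext (p@[k]) n. ?f s) = W' x u z (p@[k]) * Qc x u z v (\<lambda>_. True) n (stof (p@[k]))" by (rule Suc.IH)
  qed
  also have "\<dots> = W' x u z p * (\<Sum>k\<in>{..Suc (asc p)}. wt x u z (stof p) k * Qc x u z v (\<lambda>_. True) n (stp (stof p) k))"
    unfolding sum_distrib_left by (rule sum.cong[OF refl]) (simp add: W'_snoc stof_snoc ne)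
  also have "{..Suc (asc p)} = alw (\<lambda>_. True) (stof p)" by (auto simp: alw_def stof_def)
  finally show ?case by simp
qed

lemma fix_down: assumes "ascent_seq s" "i < length s" "s!i = i" "j \<le> i" shows "s!j = j"
proof (cases "i = 0")
  case True thus ?thesis using assms by (simp add: ascent_seq_def)
next
  case False
  let ?A = "{j. Suc j < i \<and> s!j < s!Suc j}"
  have "s!i \<le> asc (take i s) + 1" using assms(1,2) False unfolding ascent_seq_def by simp
  hence c: "i - 1 \<le> card ?A" using assms(2,3) asc_take[of i s] by simp
  have sub: "?A \<subseteq> {..<i-1}" by auto
  have "card ?A \<le> i - 1" using card_mono[OF _ sub] by simp
  hence "card ?A = card {..<i-1}" using c by simp
  hence A: "?A = {..<i-1}" using card_subset_eq[OF _ sub] by simp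
  have inc: "\<And>j. j < i - 1 \<Longrightarrow> s!j < s!Suc j" using A by blast
  have ge: "\<And>j. j \<le> i - 1 \<Longrightarrow> j \<le> s!j"
  proof -
    fix j show "j \<le> i - 1 \<Longrightarrow> j \<le> s!j"
    proof (induction j)
      case 0 thus ?case by simp
    next
      case (Suc j) thus ?case using inc[of j] by simp
    qed
  qed
  show ?thesis
  proof (cases "j = i")
    case True thus ?thesis using assms by simp
  next
    case False
    hence "j \<le> i - 1" using assms(4) by simp
    moreover have "s!j \<le> j" using asc_seq_nth_le[OF assms(1)] assms(2,4) by simp
    ultimately show ?thesis using ge by (simp add: le_antisym)
  qed
qed

lemma dc_interval: assumes "finite F" "\<forall>i\<in>F. \<forall>j\<le>i. j \<in> F" shows "F = {..<card F}"
proof (cases "F = {}")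
  case True thus ?thesis by simp
next
  case False
  obtain M where M: "M = Max F" by simp
  have e: "F = {..M}"
  proof
    show "F \<subseteq> {..M}" using assms(1) M by auto
    show "{..M} \<subseteq> F" using assms(2) Max_in[OF assms(1) False] M by auto
  qed
  show ?thesis unfolding e by (simp add: lessThan_Suc_atMost)
qed

definition FF :: "nat list \<Rightarrow> nat set" where "FF s = {i. i < length s \<and> s!i = i}"

lemma FF_dc: "ascent_seq s \<Longrightarrow> FF s = {..<max_st s}"
proof -
  assume a: "ascent_seq s"
  have fin: "finite (FF s)" unfolding FF_def by (rule finite_subset[of _ "{..<length s}"]) auto
  have "\<forall>i\<in>FF s. \<forall>j\<le>i. j \<in> FF s" unfolding FF_def using fix_down[OF a] by auto
  thus ?thesis using dc_interval[OF fin] by (simp add: FF_def max_st_def)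
qed

lemma max_char: assumes "ascent_seq s" "max_st s < length s"
  shows "1 \<le> max_st s \<and> s!max_st s < max_st s \<and> take (Suc (max_st s)) s = [0..<max_st s] @ [s!max_st s]"
proof -
  let ?m = "max_st s"
  have F: "FF s = {..<?m}" using FF_dc[OF assms(1)] .
  have ne: "s \<noteq> []" "s!0 = 0" using assms(1) by (auto simp: ascent_seq_def)
  have "0 \<in> FF s" using ne by (simp add: FF_def)
  hence m1: "1 \<le> ?m" using F by simp
  have "?m \<notin> FF s" using F by simp
  hence "s!?m \<noteq> ?m" using assms(2) by (simp add: FF_def)
  moreover have "s!?m \<le> ?m" using asc_seq_nth_le[OF assms] .
  ultimately have lt: "s!?m < ?m" by simp
  have "take (Suc ?m) s = [0..<?m] @ [s!?m]"
  proof (rule nth_equalityI)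
    show "length (take (Suc ?m) s) = length ([0..<?m] @ [s!?m])" using assms(2) by simp
    fix i assume "i < length (take (Suc ?m) s)"
    hence i: "i < Suc ?m" by simp
    show "take (Suc ?m) s ! i = ([0..<?m] @ [s!?m]) ! i"
    proof (cases "i < ?m")
      case True
      hence "i \<in> FF s" using F by simp
      thus ?thesis using True by (simp add: FF_def nth_append)
    next
      case False hence "i = ?m" using i by simp
      thus ?thesis by (simp add: nth_append)
    qed
  qed
  thus ?thesis using m1 lt by simp
qed

lemma max_char2: assumes "ascent_seq s" "m < length s" "take (Suc m) s = [0..<m] @ [e]" "e < m"
  shows "max_st s = m"
proof -
  have nth: "\<And>i. i < Suc m \<Longrightarrow> s!i = ([0..<m] @ [e])!i"
    using assms(3) by (metis nth_take)
  have sm: "s!m = e" using nth[of m] by (simp add: nth_append)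
  have "FF s = {..<m}"
  proof (intro equalityI subsetI)
    fix i assume i: "i \<in> FF s"
    show "i \<in> {..<m}"
    proof (rule ccontr)
      assume "i \<notin> {..<m}"
      hence "m \<le> i" by simp
      hence "s!m = m" using fix_down[OF assms(1), of i m] i by (simp add: FF_def)
      thus False using sm assms(4) by simp
    qed
  next
    fix i assume "i \<in> {..<m}"
    hence "i < m" by simp
    thus "i \<in> FF s" using nth[of i] assms(2) by (simp add: FF_def nth_append)
  qed
  thus ?thesis using FF_dc[OF assms(1)] by (metis card_lessThan)
qed

lemma upt_props: "1 \<le> m \<Longrightarrow> ascent_seq [0..<m] \<and> asc [0..<m] = m - 1"
proof (induction m)
  case 0 thus ?case by simp
next
  case (Suc m)
  show ?case
  proof (cases "m = 0")
    case True thus ?thesis by (simp add: ascent_seq_def asc_def)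
  next
    case False
    hence IH: "ascent_seq [0..<m] \<and> asc [0..<m] = m - 1" using Suc.IH by simp
    have ne: "[0..<m] \<noteq> []" using False by simp
    have l: "last [0..<m] = m - 1" using False by (simp add: last_conv_nth)
    have "asc ([0..<m] @ [m]) = m" using asc_snoc[OF ne, of m] IH l False by simp
    moreover have "ascent_seq ([0..<m] @ [m])" using ascent_seq_snoc[OF ne, of m] IH by simp
    ultimately show ?thesis by simp
  qed
qed

definition pm :: "nat \<Rightarrow> nat \<Rightarrow> nat list" where "pm m e = [0..<m] @ [e]"

lemma rv_upt: "rv [0..<m] = {..<m}"
proof -
  have "rms [0..<m] = {..<m}" unfolding rms_def by auto
  thus ?thesis unfolding rv_def by auto
qed

lemma pm_props: assumes "1 \<le> m" "e < m"
  shows "ascent_seq (pm m e)" "length (pm m e) = Suc m" "stof (pm m e) = pst m (int e)"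
    "W' x u z (pm m e) = x * u^(m-1) * z * (if e = 0 then z else 1)"
proof -
  have U: "ascent_seq [0..<m] \<and> asc [0..<m] = m - 1" using upt_props[OF assms(1)] .
  have ne: "[0..<m] \<noteq> []" using assms by simp
  have l: "last [0..<m] = m - 1" using assms by (simp add: last_conv_nth)
  show "ascent_seq (pm m e)" unfolding pm_def using ascent_seq_snoc[OF ne] U assms by simp
  show "length (pm m e) = Suc m" by (simp add: pm_def)
  have a: "asc (pm m e) = m - 1" unfolding pm_def using asc_snoc[OF ne, of e] U l assms by simp
  have st: "set (pm m e) = {..<m}" using assms by (auto simp: pm_def)
  have rv: "rv (pm m e) = {..e}" unfolding pm_def rv_snoc rv_upt using assms by auto
  show "stof (pm m e) = pst m (int e)" using a st rv assms by (simp add: stof_def pst_nat pm_def)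
  have rp: "rep (pm m e) = 1" using st by (simp add: rep_def pm_def)
  have z0: "zero_st [0..<m] = 1"
  proof -
    have "{i. i < length [0..<m] \<and> [0..<m]!i = 0} = {0}" using assms by auto
    thus ?thesis by (simp add: zero_st_def)
  qed
  have z: "zero_st (pm m e) = 1 + (if e = 0 then 1 else 0)" unfolding pm_def zero_snoc z0 by simp
  show "W' x u z (pm m e) = x * u^(m-1) * z * (if e = 0 then z else 1)"
    by (simp add: W'_def rp a z)
qed

definition Sy :: "'a::comm_ring_1 \<Rightarrow> (nat \<Rightarrow> 'a fps) \<Rightarrow> 'a fps" where
  "Sy y f = Abs_fps (\<lambda>n. \<Sum>m\<le>n. y^m * (f m $ n))"

definition cc :: "'a::field \<Rightarrow> 'a \<Rightarrow> 'a \<Rightarrow> nat \<Rightarrow> 'a fps" where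
  "cc x u z m = (if m = 0 then 0 else fps_const (x * u^(m-1) * z) * fps_X^(Suc m))"
definition gg :: "'a::field \<Rightarrow> 'a \<Rightarrow> 'a \<Rightarrow> 'a \<Rightarrow> nat \<Rightarrow> nat \<Rightarrow> 'a fps" where
  "gg x u z v m e = cc x u z m * qq x u z v m (int e)"
definition GG :: "'a::field \<Rightarrow> 'a \<Rightarrow> 'a \<Rightarrow> 'a \<Rightarrow> nat \<Rightarrow> nat \<Rightarrow> 'a fps" where
  "GG x u z v m e = fps_const (if e = 0 then z else 1) * gg x u z v m e"
definition Gw :: "'a::field \<Rightarrow> 'a \<Rightarrow> 'a \<Rightarrow> 'a \<Rightarrow> 'a \<Rightarrow> nat \<Rightarrow> 'a fps" where
  "Gw x u z v w m = (\<Sum>e<m. fps_const (w^e) * GG x u z v m e)"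

lemma GG_nth: "1 \<le> m \<Longrightarrow> GG x u z v m e $ n = (if Suc m \<le> n then x * u^(m-1) * z * (if e = 0 then z else 1) * Qc x u z v (\<lambda>_. True) (n - Suc m) (pst m (int e)) else 0)"
  by (simp add: GG_def gg_def cc_def mult.assoc fps_X_power_mult_nth qf_def del: power_Suc)

lemma Fgf_eq: "Fgf x y w u z v = Sy y (Gw x u z v w)"
proof (rule fps_ext)
  fix n
  let ?S = "{s. ascent_seq s \<and> length s = n \<and> max_st s < length s}"
  let ?F = "\<lambda>s. x ^ rep s * y ^ max_st s * w ^ ealm s * u ^ asc s * z ^ zero_st s * v ^ rmin s"
  let ?T = "Sigma {1..<n} (\<lambda>m. {..<m})"
  let ?key = "\<lambda>s. (max_st s, ealm s)"
  have finS: "finite ?S"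
  proof (rule finite_subset)
    show "?S \<subseteq> {s. set s \<subseteq> {..n} \<and> length s = n}"
    proof
      fix s assume s: "s \<in> ?S"
      have "\<And>a. a \<in> set s \<Longrightarrow> a \<le> n"
      proof -
        fix a assume "a \<in> set s"
        then obtain i where "i < length s" "s!i = a" by (auto simp: in_set_conv_nth)
        thus "a \<le> n" using asc_seq_nth_le[of s i] s by fastforce
      qed
      thus "s \<in> {s. set s \<subseteq> {..n} \<and> length s = n}" using s by auto
    qed
    show "finite {s. set s \<subseteq> {..n} \<and> length s = n}" by (rule finite_lists_length_eq) simp
  qed
  have keyT: "?key ` ?S \<subseteq> ?T"
  proof
    fix p assume "p \<in> ?key ` ?S"
    then obtain s where s: "s \<in> ?S" "p = ?key s" by blast
    have "1 \<le> max_st s \<and> s!max_st s < max_st s" using max_char[of s] s(1) by simp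
    thus "p \<in> ?T" using s by (simp add: ealm_def)
  qed
  have grp: "\<And>m e. (m,e) \<in> ?T \<Longrightarrow> {s \<in> ?S. ?key s = (m,e)} = Ext (pm m e) (n - Suc m)"
  proof -
    fix m e assume me: "(m,e) \<in> ?T"
    hence me': "1 \<le> m" "m < n" "e < m" by auto
    show "{s \<in> ?S. ?key s = (m,e)} = Ext (pm m e) (n - Suc m)"
    proof (intro equalityI subsetI)
      fix s assume "s \<in> {s \<in> ?S. ?key s = (m,e)}"
      hence s: "ascent_seq s" "length s = n" "max_st s = m" "ealm s = e" "max_st s < length s" by auto
      have "take (Suc m) s = pm m e" using max_char[OF s(1) s(5)] s(3,4) by (simp add: ealm_def pm_def)
      thus "s \<in> Ext (pm m e) (n - Suc m)" using s me' by (simp add: Ext_def pm_props)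
    next
      fix s assume "s \<in> Ext (pm m e) (n - Suc m)"
      hence s: "ascent_seq s" "length s = n" "take (Suc m) s = [0..<m] @ [e]" using me' by (auto simp: Ext_def pm_props pm_def)
      have mx: "max_st s = m" using max_char2[OF s(1) _ s(3) me'(3)] s(2) me' by simp
      have "s!m = e" using s(3) by (metis lessI nth_append_length length_upt minus_nat.diff_0 nth_take)
      thus "s \<in> {s \<in> ?S. ?key s = (m,e)}" using s mx me' by (simp add: ealm_def)
    qed
  qed
  have "Fgf x y w u z v $ n = (\<Sum>s\<in>?S. ?F s)" by (simp add: Fgf_def)
  also have "\<dots> = (\<Sum>p\<in>?T. \<Sum>s\<in>{s \<in> ?S. ?key s = p}. ?F s)"
    by (rule sum.group[symmetric, OF finS _ keyT]) simp
  also have "\<dots> = (\<Sum>p\<in>?T. y^fst p * w^snd p * (x * u^(fst p - 1) * z * (if snd p = 0 then z else 1)) *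
        Qc x u z v (\<lambda>_. True) (n - Suc (fst p)) (pst (fst p) (int (snd p))))"
  proof (rule sum.cong[OF refl])
    fix p assume pT: "p \<in> ?T"
    obtain m e where p: "p = (m,e)" by fastforce
    have me': "1 \<le> m" "m < n" "e < m" using pT p by auto
    have "(\<Sum>s\<in>{s \<in> ?S. ?key s = p}. ?F s) = (\<Sum>s\<in>Ext (pm m e) (n - Suc m). y^m * w^e * (x ^ rep s * u ^ asc s * z ^ zero_st s * v ^ rmin s))"
      unfolding p grp[OF pT[unfolded p]]
    proof (rule sum.cong[OF refl])
      fix s assume "s \<in> Ext (pm m e) (n - Suc m)"
      hence s: "ascent_seq s" "length s = n" "take (Suc m) s = [0..<m] @ [e]" using me' by (auto simp: Ext_def pm_props pm_def)
      have mx: "max_st s = m" using max_char2[OF s(1) _ s(3) me'(3)] s(2) me' by simp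
      have "s!m = e" using s(3) by (metis lessI nth_append_length length_upt minus_nat.diff_0 nth_take)
      thus "?F s = y^m * w^e * (x ^ rep s * u ^ asc s * z ^ zero_st s * v ^ rmin s)" using mx by (simp add: ealm_def ac_simps)
    qed
    also have "\<dots> = y^m * w^e * (W' x u z (pm m e) * Qc x u z v (\<lambda>_. True) (n - Suc m) (stof (pm m e)))"
      by (simp add: sum_distrib_left[symmetric] link pm_props(1)[OF me'(1,3)])
    also have "\<dots> = y^m * w^e * (x * u^(m-1) * z * (if e = 0 then z else 1)) * Qc x u z v (\<lambda>_. True) (n - Suc m) (pst m (int e))"
      by (simp only: pm_props(3,4)[OF me'(1,3)] mult.assoc)
    finally show "(\<Sum>s\<in>{s \<in> ?S. ?key s = p}. ?F s) = y^fst p * w^snd p * (x * u^(fst p - 1) * z * (if snd p = 0 then z else 1)) *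
        Qc x u z v (\<lambda>_. True) (n - Suc (fst p)) (pst (fst p) (int (snd p)))"
      using p by simp
  qed
  also have "\<dots> = (\<Sum>m\<in>{1..<n}. \<Sum>e<m. y^m * w^e * (x * u^(m - 1) * z * (if e = 0 then z else 1)) *
        Qc x u z v (\<lambda>_. True) (n - Suc m) (pst m (int e)))"
    by (subst sum.Sigma) (auto simp: split_beta)
  also have "\<dots> = (\<Sum>m\<le>n. y^m * (Gw x u z v w m $ n))"
  proof -
    have "(\<Sum>m\<le>n. y^m * (Gw x u z v w m $ n)) = (\<Sum>m\<in>{1..<n}. y^m * (Gw x u z v w m $ n))"
    proof (rule sum.mono_neutral_right)
      show "\<forall>m\<in>{..n} - {1..<n}. y^m * (Gw x u z v w m $ n) = 0"
      proof
        fix m assume "m \<in> {..n} - {1..<n}"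
        hence "m = 0 \<or> m = n" by auto
        thus "y^m * (Gw x u z v w m $ n) = 0"
        proof
          assume "m = 0" thus ?thesis by (simp add: Gw_def)
        next
          assume mn: "m = n"
          show ?thesis
          proof (cases "n = 0")
            case True thus ?thesis using mn by (simp add: Gw_def)
          next
            case False thus ?thesis using mn by (simp add: Gw_def fps_sum_nth GG_nth)
          qed
        qed
      qed
    qed auto
    also have "\<dots> = (\<Sum>m\<in>{1..<n}. \<Sum>e<m. y^m * w^e * (x * u^(m - 1) * z * (if e = 0 then z else 1)) *
        Qc x u z v (\<lambda>_. True) (n - Suc m) (pst m (int e)))"
    proof (rule sum.cong[OF refl])
      fix m assume "m \<in> {1..<n}"
      hence m: "1 \<le> m" "Suc m \<le> n" by auto
      show "y^m * (Gw x u z v w m $ n) = (\<Sum>e<m. y^m * w^e * (x * u^(m - 1) * z * (if e = 0 then z else 1)) *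
        Qc x u z v (\<lambda>_. True) (n - Suc m) (pst m (int e)))"
        using m by (simp add: Gw_def fps_sum_nth GG_nth sum_distrib_left ac_simps)
    qed
    finally show ?thesis by simp
  qed
  also have "\<dots> = Sy y (Gw x u z v w) $ n" by (simp add: Sy_def)
  finally show "Fgf x y w u z v $ n = Sy y (Gw x u z v w) $ n" .
qed

definition ordc :: "(nat \<Rightarrow> 'a::comm_ring_1 fps) \<Rightarrow> bool" where
  "ordc f \<longleftrightarrow> (\<forall>m n. n < m \<longrightarrow> f m $ n = 0)"

lemma Sy_add: "Sy y (\<lambda>m. f m + g m) = Sy y f + Sy y g"
  by (simp add: Sy_def fps_eq_iff sum.distrib algebra_simps)
lemma Sy_diff: "Sy y (\<lambda>m. f m - g m) = Sy y f - Sy y g"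
  by (simp add: Sy_def fps_eq_iff sum_subtractf algebra_simps)
lemma Sy_cmult: "Sy y (\<lambda>m. fps_const c * f m) = fps_const c * Sy y f"
  by (simp add: Sy_def fps_eq_iff sum_distrib_left algebra_simps)
lemma Sy_zero: "Sy y (\<lambda>m. 0) = 0"
  by (simp add: Sy_def fps_eq_iff)
lemma Sy_delta: "Sy y (\<lambda>m. if m = 0 then g else 0) = g"
proof -
  have "\<And>n. (\<Sum>m\<le>n. y^m * ((if m = 0 then g else 0) $ n)) = g $ n"
    by (subst sum.remove[of _ 0]) auto
  thus ?thesis by (simp add: Sy_def fps_eq_iff)
qed
lemma Sy_pow: "Sy y (\<lambda>m. fps_const (w^m) * f m) = Sy (w*y) f"
  by (simp add: Sy_def fps_eq_iff power_mult_distrib algebra_simps)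

lemma Sy_mult: assumes "ordc f" shows "Sy y (\<lambda>m. g * f m) = g * Sy y f"
proof (rule fps_ext)
  fix n
  have "Sy y (\<lambda>m. g * f m) $ n = (\<Sum>m\<le>n. \<Sum>i\<le>n. y^m * (g $ i * f m $ (n - i)))"
    by (simp add: Sy_def fps_mult_nth atLeast0AtMost sum_distrib_left)
  also have "\<dots> = (\<Sum>i\<le>n. \<Sum>m\<le>n. y^m * (g $ i * f m $ (n - i)))" by (rule sum.swap)
  also have "\<dots> = (\<Sum>i\<le>n. g $ i * (\<Sum>m\<le>n - i. y^m * f m $ (n - i)))"
  proof (rule sum.cong[OF refl])
    fix i assume i: "i \<in> {..n}"
    have "(\<Sum>m\<le>n. y^m * (g $ i * f m $ (n - i))) = (\<Sum>m\<le>n - i. y^m * (g $ i * f m $ (n - i)))"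
    proof (rule sum.mono_neutral_right)
      show "\<forall>m\<in>{..n} - {..n - i}. y^m * (g $ i * f m $ (n - i)) = 0"
        using assms unfolding ordc_def by auto
    qed auto
    thus "(\<Sum>m\<le>n. y^m * (g $ i * f m $ (n - i))) = g $ i * (\<Sum>m\<le>n - i. y^m * f m $ (n - i))"
      by (simp add: sum_distrib_left algebra_simps)
  qed
  also have "\<dots> = (g * Sy y f) $ n" by (simp add: fps_mult_nth Sy_def atLeast0AtMost)
  finally show "Sy y (\<lambda>m. g * f m) $ n = (g * Sy y f) $ n" .
qed

lemma Sy_shift: assumes "ordc f" shows "fps_const y * Sy y (\<lambda>m. f (Suc m)) = Sy y f - f 0"
proof (rule fps_ext)
  fix n
  have a: "(fps_const y * Sy y (\<lambda>m. f (Suc m))) $ n = (\<Sum>m\<le>n. y^Suc m * f (Suc m) $ n)"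
    by (simp add: Sy_def sum_distrib_left algebra_simps)
  have b: "(\<Sum>m\<le>Suc n. y^m * f m $ n) = f 0 $ n + (\<Sum>m\<le>n. y^Suc m * f (Suc m) $ n)"
    by (subst sum.atMost_Suc_shift) simp
  have c: "(\<Sum>m\<le>Suc n. y^m * f m $ n) = (\<Sum>m\<le>n. y^m * f m $ n)"
    using assms unfolding ordc_def by simp
  have "(fps_const y * Sy y (\<lambda>m. f (Suc m))) $ n = (\<Sum>m\<le>n. y^m * f m $ n) - f 0 $ n"
    using a b c by (simp add: algebra_simps)
  thus "(fps_const y * Sy y (\<lambda>m. f (Suc m))) $ n = (Sy y f - f 0) $ n" by (simp add: Sy_def)
qed

lemma Sy_rec: assumes "ordc a" "a 0 = 0" "b 0 = 0" "\<And>m. 1 \<le> m \<Longrightarrow> a (Suc m) = b m"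
  shows "Sy y a = fps_const y * (Sy y b + a 1)"
proof -
  have "(\<lambda>m. a (Suc m)) = (\<lambda>m. b m + (if m = 0 then a 1 else 0))"
    using assms(3,4) by (auto simp: fun_eq_iff)
  hence "Sy y (\<lambda>m. a (Suc m)) = Sy y b + a 1" by (simp add: Sy_add Sy_delta)
  thus ?thesis using Sy_shift[OF assms(1), of y] assms(2) by simp
qed

lemma ordc_add: "ordc f \<Longrightarrow> ordc g \<Longrightarrow> ordc (\<lambda>m. f m + g m)" by (simp add: ordc_def)

lemma cc_nth0: "n < Suc m \<Longrightarrow> (cc x u z m * g) $ n = 0"
  by (simp add: cc_def mult.assoc fps_X_power_mult_nth del: power_Suc)

lemma ordc_cc: "ordc (\<lambda>m. cc x u z m * h m)"
  unfolding ordc_def using cc_nth0 by (metis less_SucI)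

lemma ordc_ccsum: "ordc (\<lambda>m. \<Sum>e<m. fps_const (a m e) * (cc x u z m * h m e))"
  unfolding ordc_def by (simp add: fps_sum_nth cc_nth0 mult.left_commute[of "fps_const _"] less_SucI)

definition Hq :: "'a::field \<Rightarrow> 'a \<Rightarrow> 'a \<Rightarrow> 'a \<Rightarrow> nat \<Rightarrow> 'a fps" where
  "Hq x u z v m = cc x u z m * qq x u z v m (-1)"
definition gw :: "'a::field \<Rightarrow> 'a \<Rightarrow> 'a \<Rightarrow> 'a \<Rightarrow> 'a \<Rightarrow> nat \<Rightarrow> 'a fps" where
  "gw x u z v w m = (\<Sum>e<m. fps_const (w^e) * gg x u z v m e)"
definition dq :: "'a::field \<Rightarrow> 'a \<Rightarrow> 'a \<Rightarrow> 'a \<Rightarrow> nat \<Rightarrow> nat \<Rightarrow> 'a fps" where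
  "dq x u z v m j = cc x u z m * qf x u z v (\<lambda>k. j < k) (m, int j, {..<m}, {..<j})"
definition DDw :: "'a::field \<Rightarrow> 'a \<Rightarrow> 'a \<Rightarrow> 'a \<Rightarrow> 'a \<Rightarrow> nat \<Rightarrow> 'a fps" where
  "DDw x u z v w m = (\<Sum>j<m. fps_const (w^j) * dq x u z v m j)"
definition kk :: "'a::field \<Rightarrow> 'a \<Rightarrow> 'a \<Rightarrow> 'a \<Rightarrow> nat \<Rightarrow> 'a fps" where
  "kk x u v w m = (\<Sum>j<m. fps_const ((w*v)^j) * (cc x u 1 m * qq x u 1 v (m - Suc j) (-1)))"
definition rr :: "'a::field \<Rightarrow> 'a \<Rightarrow> 'a fps" where
  "rr x u = fps_const (u + x - x*u) * fps_X"

lemma cc_Suc: "1 \<le> m \<Longrightarrow> cc x u z (Suc m) = fps_X * fps_const u * cc x u z m"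
proof -
  assume m: "1 \<le> m"
  have "u^m = u * u^(m-1)" using m by (metis Suc_diff_le diff_Suc_1 power_Suc)
  thus ?thesis using m by (simp add: cc_def fps_const_mult[symmetric] algebra_simps del: fps_const_mult)
qed

lemma cc_z: "cc x u z m = fps_const z * cc x u 1 m"
  by (simp add: cc_def fps_const_mult[symmetric] algebra_simps del: fps_const_mult)

lemma per_j: assumes "1 \<le> m" "j < m"
  shows "GG x u z v (Suc m) j = cc x u z m * qq x u z v m (int j - 1) - gg x u z v m j + rr x u * GG x u z v m j
     + fps_const (v-1) * dq x u z v m j"
proof -
  have R: "qq x u z v m (int j) = qq x u z v m (int j - 1)
   + fps_X * fps_const (if j = 0 then z else 1) * (fps_const x * qq x u z v m (int j) - fps_const u * qq x u z v (Suc m) (int j)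
       + fps_const (u * (1 - x)) * qq x u z v m (int j))
   + fps_const (v - 1) * qf x u z v (\<lambda>k. j < k) (m, int j, {..<m}, {..<j})" by (rule R1[OF assms(2)])
  have gen: "\<And>(a::'a fps) b c d C X Z cx cu cux1 cr cv1. a = b + X*Z*(cx*a - cu*c + cux1*a) + cv1*d \<Longrightarrow> cr = cx + cux1 \<Longrightarrow>
     Z*((X*cu*C)*c) = C*b - C*a + cr*X*(Z*(C*a)) + cv1*(C*d)" by algebra
  have cr: "fps_const (u + x - x*u) = fps_const x + fps_const (u * (1 - x))" by (simp add: algebra_simps)
  have "fps_const (if j = 0 then z else 1) * ((fps_X * fps_const u * cc x u z m) * qq x u z v (Suc m) (int j))
     = cc x u z m * qq x u z v m (int j - 1) - cc x u z m * qq x u z v m (int j)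
       + fps_const (u + x - x*u) * fps_X * (fps_const (if j = 0 then z else 1) * (cc x u z m * qq x u z v m (int j)))
       + fps_const (v - 1) * (cc x u z m * qf x u z v (\<lambda>k. j < k) (m, int j, {..<m}, {..<j}))"
    by (rule gen[OF R cr])
  thus ?thesis unfolding GG_def gg_def dq_def rr_def cc_Suc[OF assms(1)] by (simp only: mult.assoc)
qed

lemma Wstar: assumes "1 \<le> m"
  shows "Gw x u z v w (Suc m) = Hq x u z v m - fps_const (1-w) * gw x u z v w m + rr x u * Gw x u z v w m
    - fps_const (w^m * v^m) * cc x u z m - fps_X * fps_const x * fps_const (w^m) * Gw x u z v 1 m
    + fps_const (v-1) * DDw x u z v w m"
proof -
  obtain m' where m: "m = Suc m'" using assms by (metis Suc_le_D One_nat_def)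
  let ?A = "\<Sum>j<m. fps_const (w^j) * (cc x u z m * qq x u z v m (int j - 1))"
  let ?P = "\<Sum>j<m'. fps_const (w^j) * gg x u z v m j"
  have S1: "(\<Sum>j<m. fps_const (w^j) * GG x u z v (Suc m) j) = ?A - gw x u z v w m + rr x u * Gw x u z v w m + fps_const (v-1) * DDw x u z v w m"
  proof -
    have "(\<Sum>j<m. fps_const (w^j) * GG x u z v (Suc m) j) = (\<Sum>j<m. fps_const (w^j) * (cc x u z m * qq x u z v m (int j - 1))
       - fps_const (w^j) * gg x u z v m j + rr x u * (fps_const (w^j) * GG x u z v m j) + fps_const (v-1) * (fps_const (w^j) * dq x u z v m j))"
    proof (rule sum.cong[OF refl])
      fix j assume "j \<in> {..<m}"
      hence j: "j < m" by simp
      show "fps_const (w^j) * GG x u z v (Suc m) j = fps_const (w^j) * (cc x u z m * qq x u z v m (int j - 1))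
       - fps_const (w^j) * gg x u z v m j + rr x u * (fps_const (w^j) * GG x u z v m j) + fps_const (v-1) * (fps_const (w^j) * dq x u z v m j)"
        unfolding per_j[OF assms j] by (simp only: algebra_simps)
    qed
    thus ?thesis by (simp only: sum.distrib sum_subtractf sum_distrib_left[symmetric] gw_def Gw_def DDw_def)
  qed
  have S2: "Gw x u z v w (Suc m) = (\<Sum>j<m. fps_const (w^j) * GG x u z v (Suc m) j) + fps_const (w^m) * GG x u z v (Suc m) m"
    by (simp add: Gw_def)
  have S3: "?A = Hq x u z v m + fps_const w * ?P"
  proof -
    have "?A = fps_const (w^0) * (cc x u z m * qq x u z v m (int 0 - 1)) + (\<Sum>j<m'. fps_const (w^Suc j) * (cc x u z m * qq x u z v m (int (Suc j) - 1)))"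
      unfolding m by (rule sum.lessThan_Suc_shift)
    also have "\<dots> = Hq x u z v m + fps_const w * ?P"
      by (simp add: Hq_def gg_def sum_distrib_left mult.assoc fps_const_mult[symmetric] del: fps_const_mult)
    finally show ?thesis .
  qed
  have S4: "gw x u z v w m = ?P + fps_const (w^m') * gg x u z v m m'"
    by (simp add: gw_def m)
  have S5: "gg x u z v m m' = fps_const (v^m) * cc x u z m + fps_X * fps_const x * Gw x u z v 1 m + gg x u z v (Suc m) m"
  proof -
    have R: "qq x u z v (Suc m') (int m') = fps_const (v^Suc m') + fps_X * ((\<Sum>k<Suc m'. fps_const (x * (if k = 0 then z else 1)) * qq x u z v (Suc m') (int k))
     + fps_const u * qq x u z v (Suc (Suc m')) (int (Suc m')))" by (rule R3)
    have e1: "cc x u z m * (fps_X * (\<Sum>k<m. fps_const (x * (if k = 0 then z else 1)) * qq x u z v m (int k))) = fps_X * fps_const x * Gw x u z v 1 m"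
      by (simp add: Gw_def GG_def gg_def sum_distrib_left algebra_simps fps_const_mult[symmetric] del: fps_const_mult)
    have e2: "cc x u z m * (fps_X * (fps_const u * qq x u z v (Suc m) (int m))) = gg x u z v (Suc m) m"
      by (simp add: gg_def cc_Suc[OF assms] algebra_simps)
    have "gg x u z v m m' = cc x u z m * qq x u z v (Suc m') (int m')" by (simp add: gg_def m)
    also have "\<dots> = cc x u z m * fps_const (v^m) + cc x u z m * (fps_X * (\<Sum>k<m. fps_const (x * (if k = 0 then z else 1)) * qq x u z v m (int k)))
       + cc x u z m * (fps_X * (fps_const u * qq x u z v (Suc m) (int m)))"
      unfolding R m by (simp only: distrib_left add.assoc)
    finally show ?thesis unfolding e1 e2 by (simp add: mult.commute)
  qed
  have S6: "GG x u z v (Suc m) m = gg x u z v (Suc m) m" using assms by (simp add: GG_def)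
  have cw: "fps_const (w^m) = fps_const w * fps_const (w^m')" by (simp add: m)
  have gen: "\<And>(G'::'a fps) S A gwv RG cv1 DD cwm GGm Hqv cw P cwm' gm cvm C X cx Gw1 ggS.
     S = A - gwv + RG + cv1*DD \<Longrightarrow> G' = S + cwm*GGm \<Longrightarrow> A = Hqv + cw*P \<Longrightarrow> gwv = P + cwm'*gm \<Longrightarrow>
     gm = cvm*C + X*cx*Gw1 + ggS \<Longrightarrow> GGm = ggS \<Longrightarrow> cwm = cw*cwm' \<Longrightarrow>
     G' = Hqv - (1 - cw)*gwv + RG - cwm*cvm*C - X*cx*cwm*Gw1 + cv1*DD" by algebra
  have "Gw x u z v w (Suc m) = Hq x u z v m - (1 - fps_const w) * gw x u z v w m + rr x u * Gw x u z v w m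
    - fps_const (w^m) * fps_const (v^m) * cc x u z m - fps_X * fps_const x * fps_const (w^m) * Gw x u z v 1 m
    + fps_const (v-1) * DDw x u z v w m"
    by (rule gen[OF S1 S2 S3 S4 S5 S6 cw])
  moreover have "1 - fps_const w = fps_const (1 - w)" by (metis fps_const_1_eq_1 fps_const_sub)
  ultimately show ?thesis by (simp only: fps_const_mult)
qed

lemma M2: "DDw x u z v w m = fps_const z * kk x u v w m"
proof -
  have "\<And>j. j < m \<Longrightarrow> fps_const (w^j) * dq x u z v m j = fps_const z * (fps_const ((w*v)^j) * (cc x u 1 m * qq x u 1 v (m - Suc j) (-1)))"
  proof -
    fix j assume j: "j < m"
    show "fps_const (w^j) * dq x u z v m j = fps_const z * (fps_const ((w*v)^j) * (cc x u 1 m * qq x u 1 v (m - Suc j) (-1)))"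
      unfolding dq_def R2[OF j] cc_z[of x u z m] by (simp add: power_mult_distrib algebra_simps)
  qed
  hence "DDw x u z v w m = (\<Sum>j<m. fps_const z * (fps_const ((w*v)^j) * (cc x u 1 m * qq x u 1 v (m - Suc j) (-1))))"
    unfolding DDw_def by (intro sum.cong) auto
  thus ?thesis by (simp add: kk_def sum_distrib_left)
qed

lemma M3: assumes "1 \<le> m"
  shows "kk x u v w (Suc m) = fps_X * fps_const u * Hq x u 1 v m + fps_X * fps_const (u*v*w) * kk x u v w m"
proof -
  have "kk x u v w (Suc m) = fps_const ((w*v)^0) * (cc x u 1 (Suc m) * qq x u 1 v (Suc m - Suc 0) (-1))
     + (\<Sum>j<m. fps_const ((w*v)^Suc j) * (cc x u 1 (Suc m) * qq x u 1 v (Suc m - Suc (Suc j)) (-1)))"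
    unfolding kk_def by (rule sum.lessThan_Suc_shift)
  also have "\<dots> = fps_X * fps_const u * Hq x u 1 v m + fps_X * fps_const (u*v*w) * kk x u v w m"
    unfolding cc_Suc[OF assms] by (simp add: Hq_def kk_def sum_distrib_left algebra_simps power_mult_distrib fps_const_mult[symmetric] del: fps_const_mult)
  finally show ?thesis .
qed

lemma Gw_alt: "Gw x u z v w m = (\<Sum>e<m. fps_const (w^e * (if e = 0 then z else 1)) * (cc x u z m * qq x u z v m (int e)))"
  unfolding Gw_def GG_def gg_def by (rule sum.cong) (simp_all add: mult.assoc)

lemma ordc_Gw: "ordc (Gw x u z v w)"
  unfolding Gw_alt by (rule ordc_ccsum)

lemma ordc_Gw_pow: "ordc (\<lambda>m. fps_const (w'^m) * Gw x u z v w m)"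
proof -
  have "(\<lambda>m. fps_const (w'^m) * Gw x u z v w m) = (\<lambda>m. \<Sum>e<m. fps_const (w'^m * (w^e * (if e = 0 then z else 1))) * (cc x u z m * qq x u z v m (int e)))"
    unfolding Gw_alt by (simp add: sum_distrib_left mult.assoc[symmetric])
  thus ?thesis by (simp only: ordc_ccsum)
qed

lemma ordc_kk: "ordc (kk x u v w)"
  unfolding kk_def by (rule ordc_ccsum)

lemma ordc_Hq: "ordc (Hq x u z v)"
  unfolding Hq_def by (rule ordc_cc)

lemma ordc_C: "ordc (\<lambda>m. fps_const (a m) * cc x u z m)"
proof -
  have "(\<lambda>m. fps_const (a m) * cc x u z m) = (\<lambda>m. cc x u z m * fps_const (a m))" by (simp add: mult.commute)
  thus ?thesis by (simp only: ordc_cc)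
qed

lemma E1: "Sy y (Gw x u z v w) = fps_const y * (Sy y (Hq x u z v) - fps_const (1-w) * Sy y (gw x u z v w)
   + rr x u * Sy y (Gw x u z v w) - Sy y (\<lambda>m. fps_const (w^m * v^m) * cc x u z m)
   - fps_X * fps_const x * Sy (w*y) (Gw x u z v 1) + fps_const (v-1) * fps_const z * Sy y (kk x u v w)
   + fps_const z * gg x u z v 1 0)"
proof -
  let ?b = "\<lambda>m. Hq x u z v m - fps_const (1-w) * gw x u z v w m + rr x u * Gw x u z v w m
    - fps_const (w^m * v^m) * cc x u z m - fps_X * fps_const x * fps_const (w^m) * Gw x u z v 1 m
    + fps_const (v-1) * DDw x u z v w m"
  have rec: "Sy y (Gw x u z v w) = fps_const y * (Sy y ?b + Gw x u z v w 1)"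
    apply (rule Sy_rec[OF ordc_Gw])
      apply (simp add: Gw_def)
     apply (simp add: Hq_def gw_def Gw_def cc_def DDw_def)
    by (rule Wstar)
  have "Sy y ?b = Sy y (Hq x u z v) - Sy y (\<lambda>m. fps_const (1-w) * gw x u z v w m) + Sy y (\<lambda>m. rr x u * Gw x u z v w m)
     - Sy y (\<lambda>m. fps_const (w^m * v^m) * cc x u z m) - Sy y (\<lambda>m. (fps_X * fps_const x) * (fps_const (w^m) * Gw x u z v 1 m))
     + Sy y (\<lambda>m. fps_const (v-1) * DDw x u z v w m)"
    by (simp only: Sy_add Sy_diff mult.assoc)
  also have "\<dots> = Sy y (Hq x u z v) - fps_const (1-w) * Sy y (gw x u z v w) + rr x u * Sy y (Gw x u z v w)
   - Sy y (\<lambda>m. fps_const (w^m * v^m) * cc x u z m)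
   - fps_X * fps_const x * Sy (w*y) (Gw x u z v 1) + fps_const (v-1) * fps_const z * Sy y (kk x u v w)"
    by (simp only: Sy_cmult Sy_mult[OF ordc_Gw] Sy_mult[OF ordc_Gw_pow] Sy_pow M2, simp only: mult.assoc)
  finally show ?thesis unfolding rec by (simp add: Gw_def GG_def)
qed

lemma E4: "Sy y (kk x u v w) = fps_const y * (fps_X * fps_const u * Sy y (Hq x u 1 v) + fps_X * fps_const (u*v*w) * Sy y (kk x u v w)
   + fps_const x * fps_X^2 * qq x u 1 v 0 (-1))"
proof -
  have rec: "Sy y (kk x u v w) = fps_const y * (Sy y (\<lambda>m. fps_X * fps_const u * Hq x u 1 v m + fps_X * fps_const (u*v*w) * kk x u v w m) + kk x u v w 1)"
    apply (rule Sy_rec[OF ordc_kk])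
      apply (simp add: kk_def)
     apply (simp add: kk_def Hq_def cc_def)
    by (rule M3)
  have "Sy y (\<lambda>m. fps_X * fps_const u * Hq x u 1 v m + fps_X * fps_const (u*v*w) * kk x u v w m)
      = fps_X * fps_const u * Sy y (Hq x u 1 v) + fps_X * fps_const (u*v*w) * Sy y (kk x u v w)"
    by (simp only: Sy_add Sy_mult[OF ordc_Hq] Sy_mult[OF ordc_kk])
  moreover have "kk x u v w 1 = fps_const x * fps_X^2 * qq x u 1 v 0 (-1)" by (simp add: kk_def cc_def power2_eq_square)
  ultimately show ?thesis unfolding rec by simp
qed

lemma E7: "Sy y (\<lambda>m. fps_const (w^m * v^m) * cc x u z m) = fps_const y * (fps_X * fps_const (u*v*w) * Sy y (\<lambda>m. fps_const (w^m * v^m) * cc x u z m)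
   + fps_const (w*v*x*z) * fps_X^2)"
proof -
  have rec: "Sy y (\<lambda>m. fps_const (w^m * v^m) * cc x u z m) = fps_const y * (Sy y (\<lambda>m. fps_X * fps_const (u*v*w) * (fps_const (w^m * v^m) * cc x u z m)) + fps_const (w^1 * v^1) * cc x u z 1)"
    apply (rule Sy_rec[OF ordc_C])
      apply (simp add: cc_def)
     apply (simp add: cc_def)
    apply (subst cc_Suc, assumption)
    by (simp add: algebra_simps)
  have m: "Sy y (\<lambda>m. fps_X * fps_const (u*v*w) * (fps_const (w^m * v^m) * cc x u z m)) = fps_X * fps_const (u*v*w) * Sy y (\<lambda>m. fps_const (w^m * v^m) * cc x u z m)"
    by (rule Sy_mult[OF ordc_C])
  have c1: "fps_const (w^1 * v^1) * cc x u z 1 = fps_const (w*v*x*z) * fps_X^2" by (simp add: cc_def power2_eq_square algebra_simps)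
  show ?thesis using rec by (simp only: m c1)
qed

lemma EF: "Sy y (Gw x u z v w) = Sy y (gw x u z v w) + (fps_const z - 1) * Sy y (\<lambda>m. gg x u z v m 0)"
proof -
  have "\<And>m. Gw x u z v w m = gw x u z v w m + (fps_const z - 1) * gg x u z v m 0"
  proof -
    fix m show "Gw x u z v w m = gw x u z v w m + (fps_const z - 1) * gg x u z v m 0"
    proof (cases m)
      case 0 thus ?thesis by (simp add: Gw_def gw_def gg_def cc_def)
    next
      case (Suc m')
      have "Gw x u z v w m = fps_const z * gg x u z v m 0 + (\<Sum>e<m'. fps_const (w^Suc e) * gg x u z v m (Suc e))"
        unfolding Suc Gw_def by (subst sum.lessThan_Suc_shift) (simp add: GG_def)
      moreover have "gw x u z v w m = gg x u z v m 0 + (\<Sum>e<m'. fps_const (w^Suc e) * gg x u z v m (Suc e))"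
        unfolding Suc gw_def by (subst sum.lessThan_Suc_shift) simp
      ultimately show ?thesis by (simp add: algebra_simps)
    qed
  qed
  hence "Gw x u z v w = (\<lambda>m. gw x u z v w m + (fps_const z - 1) * gg x u z v m 0)" by auto
  moreover have "ordc (\<lambda>m. gg x u z v m 0)" unfolding gg_def by (rule ordc_cc)
  ultimately show ?thesis by (simp only: Sy_add Sy_mult)
qed

lemma Gw0: "Sy y (Gw x u z v 0) = fps_const z * Sy y (\<lambda>m. gg x u z v m 0)"
proof -
  have "\<And>m. Gw x u z v 0 m = fps_const z * gg x u z v m 0"
  proof -
    fix m show "Gw x u z v 0 m = fps_const z * gg x u z v m 0"
    proof (cases m)
      case 0 thus ?thesis by (simp add: Gw_def gg_def cc_def)
    next
      case (Suc m') thus ?thesis unfolding Suc Gw_def by (subst sum.lessThan_Suc_shift) (simp add: GG_def)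
    qed
  qed
  hence "Gw x u z v 0 = (\<lambda>m. fps_const z * gg x u z v m 0)" by auto
  thus ?thesis by (simp add: Sy_cmult)
qed

lemma gw0: "Sy y (gw x u z v 0) = Sy y (\<lambda>m. gg x u z v m 0)"
proof -
  have "\<And>m. gw x u z v 0 m = gg x u z v m 0"
  proof -
    fix m show "gw x u z v 0 m = gg x u z v m 0"
    proof (cases m)
      case 0 thus ?thesis by (simp add: gw_def gg_def cc_def)
    next
      case (Suc m') thus ?thesis unfolding Suc gw_def by (subst sum.lessThan_Suc_shift) simp
    qed
  qed
  hence "gw x u z v 0 = (\<lambda>m. gg x u z v m 0)" by auto
  thus ?thesis by simp
qed

lemma sum_0pow: "(\<Sum>m\<le>n. (0::'a::comm_ring_1)^m * g m) = g 0"
  by (induct n) simp_all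

lemma Sy_0: "Sy 0 f = f 0"
  by (simp add: Sy_def fps_eq_iff sum_0pow)

lemma Sy_0y: "Sy (0*y) (Gw x u z v 1) = 0"
  by (simp add: Sy_0 Gw_def)

lemma C0: "Sy y (\<lambda>m. fps_const (0^m * v^m) * cc x u z m) = 0"
proof -
  have "(\<lambda>m. fps_const (0^m * v^m) * cc x u z m) = (\<lambda>m. 0)" by (auto simp: fun_eq_iff cc_def)
  thus ?thesis by (simp add: Sy_zero)
qed

lemma Cz: "Sy y (\<lambda>m. fps_const (w^m * v^m) * cc x u z m) = fps_const z * Sy y (\<lambda>m. fps_const (w^m * v^m) * cc x u 1 m)"
proof -
  have "(\<lambda>m. fps_const (w^m * v^m) * cc x u z m) = (\<lambda>m. fps_const z * (fps_const (w^m * v^m) * cc x u 1 m))"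
    by (subst cc_z) (simp add: algebra_simps)
  thus ?thesis by (simp add: Sy_cmult)
qed

lemma st1:
  fixes X Y cx cu cz cv KK1 HH1 F1p C11 h q110 :: "'b::idom"
  assumes E1p: "F1p = Y*(HH1 + (cu + cx - cx*cu)*X*F1p - C11 - X*cx*F1p + (cv-1)*KK1 + cx*X^2*q110)"
  and E41: "KK1 = Y*(X*cu*HH1 + X*cu*cv*KK1 + cx*X^2*h)"
  and E6: "h = 1 + X*cu*q110"
  shows "KK1*(1 - Y*cu*X) = X*cu*F1p*(1 - Y*X*cu + Y*X*cu*cx) + Y*X*cu*C11 + Y*cx*X^2"
  using assms by algebra

lemma st2:
  fixes X Y cx cu cz cv KK1 KK0 F1 f0 C11 Hh g10 :: "'b::idom"
  assumes E10: "cz*f0 = Y*(Hh - f0 + (cu + cx - cx*cu)*X*cz*f0 + (cv-1)*cz*KK0 + cz*g10)"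
  and E11: "F1 = Y*(Hh + (cu + cx - cx*cu)*X*F1 - cz*C11 - X*cx*F1 + (cv-1)*cz*KK1 + cz*g10)"
  shows "(Y - Y*cz*((cu + cx - cx*cu)*X) + cz)*f0 = (1 - Y*X*cu + Y*X*cu*cx)*F1 + Y*cz*C11 + Y*(cv-1)*cz*(KK0 - KK1)"
  using assms by algebra

lemma st3:
  fixes X Y cx cu cz cv cw KK1 KKw F1 Fw fw f0 C11 C1w Fwy Hh g10 :: "'b::idom"
  assumes E1w: "Fw = Y*(Hh - (1-cw)*fw + (cu + cx - cx*cu)*X*Fw - cz*C1w - X*cx*Fwy + (cv-1)*cz*KKw + cz*g10)"
  and E11: "F1 = Y*(Hh + (cu + cx - cx*cu)*X*F1 - cz*C11 - X*cx*F1 + (cv-1)*cz*KK1 + cz*g10)"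
  and EF: "Fw = fw + (cz-1)*f0"
  shows "(1 + (1-cw)*Y - ((cu + cx - cx*cu)*X)*Y)*Fw = (1 - Y*X*cu + Y*X*cu*cx)*F1 + (1-cw)*Y*(cz-1)*f0
     - Y*cz*(C1w - C11) - Y*X*cx*Fwy + Y*(cv-1)*cz*(KKw - KK1)"
  using assms by algebra

lemma st4:
  fixes X Y cx cu cz cv cw Fw f0 F1 Fwy F1p KKw KK1 KK0 C1w C11 :: "'b::idom"
  defines "r \<equiv> (cu + cx - cx*cu)*X"
  defines "P1 \<equiv> 1 - Y*cu*X" and "P2 \<equiv> 1 - Y*cu*cv*cw*X" and "P3 \<equiv> 1 - Y*cu*cv*X"
  defines "D \<equiv> Y - Y*cz*r + cz" and "B1 \<equiv> 1 - Y*X*cu + Y*X*cu*cx" and "K \<equiv> 1 + (1-cw)*Y - r*Y"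
  defines "M \<equiv> Y^2*cu*cw*cv*(1-cz)*X + cz*(Y - Y*r + 1)"
  assumes S1: "KK1*P1 = X*cu*F1p*B1 + Y*X*cu*C11 + Y*cx*X^2"
  and S4: "D*f0 = B1*F1 + Y*cz*C11 + Y*(cv-1)*cz*(KK0 - KK1)"
  and S5: "K*Fw = B1*F1 + (1-cw)*Y*(cz-1)*f0 - Y*cz*(C1w - C11) - Y*X*cx*Fwy + Y*(cv-1)*cz*(KKw - KK1)"
  and S2: "KKw*P2 = KK1*P3"
  and S2b: "KK0 = KK1*P3"
  and S3: "C1w*P2 = Y*cw*cv*cx*X^2"
  and S3b: "C11*P3 = Y*cv*cx*X^2"
  shows "K*Fw*P1*P2*D
     = cx*Y*cz*cv*X^2*M*Y*(1-cw)
       - X*cx*Fwy*Y*P1*P2*D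
       + B1*(cw*Y*(1-cz) + cz*(Y - Y*r + 1))*F1*P1*P2
       + Y^2*cu^2*cv*cz*(1-cv)*X^2*B1*M*F1p*(1-cw)"
proof -
  have e1: "K*Fw*P1*P2*D = B1*F1*P1*P2*D + (1-cw)*Y*(cz-1)*P1*P2*(D*f0) - Y*cz*(C1w*P2)*P1*D + Y*cz*C11*P1*P2*D
       - Y*X*cx*Fwy*P1*P2*D + Y*(cv-1)*cz*((KKw*P2)*P1*D - KK1*P1*P2*D)"
    using S5 by algebra
  also have "\<dots> = B1*F1*P1*P2*D + (1-cw)*Y*(cz-1)*P1*P2*(B1*F1 + Y*cz*C11 + Y*(cv-1)*cz*(KK1*P3 - KK1)) - Y*cz*(Y*cw*cv*cx*X^2)*P1*D + Y*cz*C11*P1*P2*D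
       - Y*X*cx*Fwy*P1*P2*D + Y*(cv-1)*cz*((KK1*P3)*P1*D - KK1*P1*P2*D)"
    unfolding S4 S2 S3 S2b ..
  also have "\<dots> = B1*F1*P1*P2*D + (1-cw)*Y*(cz-1)*P1*P2*(B1*F1 + Y*cz*C11) - Y*cz*(Y*cw*cv*cx*X^2)*P1*D + Y*cz*C11*P1*P2*D
       - Y*X*cx*Fwy*P1*P2*D + Y*(cv-1)*cz*(KK1*P1)*((1-cw)*Y*(cz-1)*P2*(P3 - 1) + D*(P3 - P2))"
    by algebra
  also have "\<dots> = B1*F1*P1*P2*D + (1-cw)*Y*(cz-1)*P1*P2*(B1*F1 + Y*cz*C11) - Y*cz*(Y*cw*cv*cx*X^2)*P1*D + Y*cz*C11*P1*P2*D
       - Y*X*cx*Fwy*P1*P2*D + Y*(cv-1)*cz*(X*cu*F1p*B1 + Y*X*cu*C11 + Y*cx*X^2)*((1-cw)*Y*(cz-1)*P2*(P3 - 1) + D*(P3 - P2))"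
    unfolding S1 ..
  also have "\<dots> = cx*Y*cz*cv*X^2*M*Y*(1-cw)
       - X*cx*Fwy*Y*P1*P2*D
       + B1*(cw*Y*(1-cz) + cz*(Y - Y*r + 1))*F1*P1*P2
       + Y^2*cu^2*cv*cz*(1-cv)*X^2*B1*M*F1p*(1-cw)"
    using S3b unfolding r_def P1_def P2_def P3_def D_def B1_def K_def M_def by algebra
  finally show ?thesis .
qed

lemma fin:
  fixes X Y cx cu cz cv cw Fw F1 Fwy F1p iP1 iP2 iD iy iw :: "'b::idom"
  defines "r \<equiv> (cu + cx - cx*cu)*X"
  defines "P1 \<equiv> 1 - Y*cu*X" and "P2 \<equiv> 1 - Y*cu*cv*cw*X"
  defines "D \<equiv> Y - Y*cz*r + cz" and "B1 \<equiv> 1 - Y*X*cu + Y*X*cu*cx" and "K \<equiv> 1 + (1-cw)*Y - r*Y"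
  defines "M \<equiv> Y^2*cu*cw*cv*(1-cz)*X + cz*(Y - Y*r + 1)"
  assumes st: "K*Fw*P1*P2*D
     = cx*Y*cz*cv*X^2*M*Y*(1-cw)
       - X*cx*Fwy*Y*P1*P2*D
       + B1*(cw*Y*(1-cz) + cz*(Y - Y*r + 1))*F1*P1*P2
       + Y^2*cu^2*cv*cz*(1-cv)*X^2*B1*M*F1p*(1-cw)"
  and i1: "P1*iP1 = 1" and i2: "P2*iP2 = 1" and i3: "D*iD = 1" and i4: "Y*iy = 1" and i5: "(1-cw)*iw = 1"
  shows "(1 - (r*Y - 1)*(iy*iw))*Fw = cx*Y*cz*cv*X^2*M*(iP1*iP2*iD) - X*cx*iw*Fwy
     + (cu*cx*X + iy - cu*X)*(cw*Y*(1-cz) + cz*(Y - Y*r + 1))*(iw*iD)*F1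
     + Y^2*cu^2*cv*cz*(1-cv)*X^2*(cu*cx*X + iy - cu*X)*iP1*M*(iP2*iD)*F1p"
proof -
  have L: "(1 - (r*Y - 1)*(iy*iw))*Fw = iy*iw*(K*Fw)"
    using i4 i5 unfolding K_def by algebra
  have R: "cx*Y*cz*cv*X^2*M*(iP1*iP2*iD) - X*cx*iw*Fwy
     + (cu*cx*X + iy - cu*X)*(cw*Y*(1-cz) + cz*(Y - Y*r + 1))*(iw*iD)*F1
     + Y^2*cu^2*cv*cz*(1-cv)*X^2*(cu*cx*X + iy - cu*X)*iP1*M*(iP2*iD)*F1p
     = iy*iw*iP1*iP2*iD*(cx*Y*cz*cv*X^2*M*Y*(1-cw)
       - X*cx*Fwy*Y*P1*P2*D
       + B1*(cw*Y*(1-cz) + cz*(Y - Y*r + 1))*F1*P1*P2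
       + Y^2*cu^2*cv*cz*(1-cv)*X^2*B1*M*F1p*(1-cw))"
    using i1 i2 i3 i4 i5 unfolding B1_def by algebra
  have "iy*iw*(K*Fw) = iy*iw*iP1*iP2*iD*(K*Fw*P1*P2*D)"
    using i1 i2 i3 by algebra
  thus ?thesis unfolding L R st[symmetric] .
qed


lemma fc_mult: "fps_const (a*b) = fps_const a * fps_const (b::'a::field)" by simp
lemma fc_sub: "fps_const (a-b) = fps_const a - fps_const (b::'a::field)" by simp
lemma fc_add: "fps_const (a+b) = fps_const a + fps_const (b::'a::field)" by simp
lemma fc_pow: "fps_const (a^n) = fps_const (a::'a::field) ^ n" by simp

theorem mainTheorem6:
  fixes x y w u z v :: "'a::field_char_0"
  assumes "y \<noteq> 0" and "w \<noteq> 1" and "y + z \<noteq> 0"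
  defines "r \<equiv> fps_const (u + x - x * u) * fps_X"
  shows "(1 - (r * fps_const y - 1) * fps_const (inverse (y * (1 - w)))) * Fgf x y w u z v
   = fps_const (x * y * z * v) * fps_X ^ 2
       * (fps_const (y ^ 2 * u * w * v * (1 - z)) * fps_X + fps_const z * (fps_const y - fps_const y * r + 1))
       * inverse ((1 - fps_const (y * u) * fps_X) * (1 - fps_const (y * u * v * w) * fps_X)
                  * (fps_const y - fps_const (y * z) * r + fps_const z))
     - fps_X * fps_const x * fps_const (inverse (1 - w)) * Fgf x (w * y) 1 u z v
     + (fps_const (u * x) * fps_X + fps_const (inverse y) - fps_const u * fps_X)
       * (fps_const (w * y * (1 - z)) + fps_const z * (fps_const y - fps_const y * r + 1))
       * inverse (fps_const (1 - w) * (fps_const y - fps_const (y * z) * r + fps_const z))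
       * Fgf x y 1 u z v
     + fps_const (y ^ 2 * u ^ 2 * v * z * (1 - v)) * fps_X ^ 2
       * (fps_const (u * x) * fps_X + fps_const (inverse y) - fps_const u * fps_X)
       * inverse (1 - fps_const (y * u) * fps_X)
       * (fps_const (y ^ 2 * u * v * w * (1 - z)) * fps_X + fps_const z * (fps_const y - fps_const y * r + 1))
       * inverse ((1 - fps_const (y * u * v * w) * fps_X) * (fps_const y - fps_const (y * z) * r + fps_const z))
       * Fgf x y 1 u 1 v"
proof -
  define X where "X = (fps_X :: 'a fps)"
  define Y where "Y = fps_const y"
  define cx where "cx = fps_const x"
  define cu where "cu = fps_const u"
  define cz where "cz = fps_const z"
  define cv where "cv = fps_const v"
  define cw where "cw = fps_const w"
  define iy where "iy = fps_const (inverse y)"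
  define iw where "iw = fps_const (inverse (1 - w))"
  define Fw where "Fw = Sy y (Gw x u z v w)"
  define fw where "fw = Sy y (gw x u z v w)"
  define f0 where "f0 = Sy y (\<lambda>m. gg x u z v m 0)"
  define F1 where "F1 = Sy y (Gw x u z v 1)"
  define Fwy where "Fwy = Sy (w*y) (Gw x u z v 1)"
  define F1p where "F1p = Sy y (Gw x u 1 v 1)"
  define Hh where "Hh = Sy y (Hq x u z v)"
  define HH1 where "HH1 = Sy y (Hq x u 1 v)"
  define KKw where "KKw = Sy y (kk x u v w)"
  define KK1 where "KK1 = Sy y (kk x u v 1)"
  define KK0 where "KK0 = Sy y (kk x u v 0)"
  define g10 where "g10 = gg x u z v 1 0"
  define h where "h = qq x u 1 v 0 (-1)"
  define q110 where "q110 = qq x u 1 v 1 0"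
  define Cw1 where "Cw1 = Sy y (\<lambda>m. fps_const (w^m * v^m) * cc x u 1 m)"
  define C11 where "C11 = Sy y (\<lambda>m. fps_const (1^m * v^m) * cc x u 1 m)"
  have rX: "rr x u = (cu + cx - cx*cu)*X" by (simp add: rr_def cu_def cx_def X_def)
  have cuvw: "fps_const (u*v*w) = cu*cv*cw" by (simp add: cu_def cv_def cw_def)
  have cuv1: "fps_const (u*v*1) = cu*cv" by (simp add: cu_def cv_def)
  have cu1: "fps_const (u*1) = cu" by (simp add: cu_def)
  have c1w: "fps_const (1-w) = 1 - cw" unfolding cw_def by (metis fps_const_1_eq_1 fps_const_sub)
  have cv1: "fps_const (v-1) = cv - 1" unfolding cv_def by (metis fps_const_1_eq_1 fps_const_sub)
  have cwvx: "fps_const (w*v*x*1) = cw*cv*cx" by (simp add: cw_def cv_def cx_def)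
  have cvx: "fps_const (1*v*x*1) = cv*cx" by (simp add: cv_def cx_def)
  have E1w: "Fw = Y*(Hh - (1-cw)*fw + (cu + cx - cx*cu)*X*Fw - cz*Cw1 - X*cx*Fwy + (cv-1)*cz*KKw + cz*g10)"
  proof -
    have e: "Fw = fps_const y * (Hh - fps_const (1-w) * fw + rr x u * Fw - fps_const z * Cw1
       - fps_X * fps_const x * Fwy + fps_const (v-1) * fps_const z * KKw + fps_const z * g10)"
      unfolding Fw_def fw_def Hh_def Cw1_def Fwy_def KKw_def g10_def Cz[symmetric] by (rule E1)
    show ?thesis using e rX c1w cv1 unfolding Y_def[symmetric] cz_def[symmetric] cx_def[symmetric] X_def[symmetric] by algebra
  qed
  have E10: "cz*f0 = Y*(Hh - f0 + (cu + cx - cx*cu)*X*cz*f0 + (cv-1)*cz*KK0 + cz*g10)"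
  proof -
    have e: "Sy y (Gw x u z v 0) = fps_const y * (Sy y (Hq x u z v) - fps_const (1-0) * Sy y (gw x u z v 0)
       + rr x u * Sy y (Gw x u z v 0) - Sy y (\<lambda>m. fps_const (0^m * v^m) * cc x u z m)
       - fps_X * fps_const x * Sy (0*y) (Gw x u z v 1) + fps_const (v-1) * fps_const z * Sy y (kk x u v 0)
       + fps_const z * gg x u z v 1 0)" by (rule E1)
    hence e2: "cz * f0 = Y * (Hh - f0 + rr x u * (cz * f0) - 0 - X * cx * 0 + fps_const (v-1) * cz * KK0 + cz * g10)"
      unfolding Gw0 gw0 C0 Sy_0y by (simp add: f0_def Y_def cz_def Hh_def KK0_def g10_def X_def cx_def)
    show ?thesis using e2 rX cv1 by algebra
  qed
  have E11: "F1 = Y*(Hh + (cu + cx - cx*cu)*X*F1 - cz*C11 - X*cx*F1 + (cv-1)*cz*KK1 + cz*g10)"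
  proof -
    have e: "Sy y (Gw x u z v 1) = fps_const y * (Sy y (Hq x u z v) - fps_const (1-1) * Sy y (gw x u z v 1)
       + rr x u * Sy y (Gw x u z v 1) - Sy y (\<lambda>m. fps_const (1^m * v^m) * cc x u z m)
       - fps_X * fps_const x * Sy (1*y) (Gw x u z v 1) + fps_const (v-1) * fps_const z * Sy y (kk x u v 1)
       + fps_const z * gg x u z v 1 0)" by (rule E1)
    hence e2: "F1 = Y * (Hh - 0 * Sy y (gw x u z v 1) + rr x u * F1 - cz * C11 - X * cx * F1 + fps_const (v-1) * cz * KK1 + cz * g10)"
      unfolding Cz[of y 1 v x u z] by (simp add: F1_def Y_def cz_def Hh_def KK1_def g10_def X_def cx_def C11_def)
    show ?thesis using e2 rX cv1 by algebra
  qed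
  have E1p: "F1p = Y*(HH1 + (cu + cx - cx*cu)*X*F1p - C11 - X*cx*F1p + (cv-1)*KK1 + cx*X^2*q110)"
  proof -
    have e: "Sy y (Gw x u 1 v 1) = fps_const y * (Sy y (Hq x u 1 v) - fps_const (1-1) * Sy y (gw x u 1 v 1)
       + rr x u * Sy y (Gw x u 1 v 1) - Sy y (\<lambda>m. fps_const (1^m * v^m) * cc x u 1 m)
       - fps_X * fps_const x * Sy (1*y) (Gw x u 1 v 1) + fps_const (v-1) * fps_const 1 * Sy y (kk x u v 1)
       + fps_const 1 * gg x u 1 v 1 0)" by (rule E1)
    have g: "gg x u 1 v 1 0 = cx * X^2 * q110" by (simp add: gg_def cc_def cx_def X_def q110_def power2_eq_square)
    have e2: "F1p = Y * (HH1 - 0 * Sy y (gw x u 1 v 1) + rr x u * F1p - C11 - X * cx * F1p + fps_const (v-1) * KK1 + gg x u 1 v 1 0)"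
      using e by (simp add: F1p_def Y_def HH1_def KK1_def X_def cx_def C11_def)
    show ?thesis using e2 rX cv1 g by algebra
  qed
  have EFw: "Fw = fw + (cz-1)*f0" unfolding Fw_def fw_def f0_def cz_def by (rule EF)
  have E4w: "KKw = Y*(X*cu*HH1 + X*(cu*cv*cw)*KKw + cx*X^2*h)"
    using E4[of y x u v w] unfolding cuvw by (simp add: KKw_def Y_def X_def cu_def HH1_def cx_def h_def)
  have E41: "KK1 = Y*(X*cu*HH1 + X*cu*cv*KK1 + cx*X^2*h)"
    using E4[of y x u v 1] unfolding cuv1 by (simp add: KK1_def Y_def X_def cu_def HH1_def cx_def h_def mult.assoc)
  have E40: "KK0 = Y*(X*cu*HH1 + cx*X^2*h)"
    using E4[of y x u v 0] by (simp add: KK0_def Y_def X_def cu_def HH1_def cx_def h_def)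
  have E6: "h = 1 + X*cu*q110"
    using R4[of x u 1 v] unfolding cu1 by (simp add: h_def q110_def X_def)
  have E7w: "Cw1 = Y*(X*(cu*cv*cw)*Cw1 + (cw*cv*cx)*X^2)"
    using E7[of y w v x u 1] unfolding cuvw cwvx by (simp add: Cw1_def Y_def X_def)
  have E71: "C11 = Y*(X*(cu*cv)*C11 + (cv*cx)*X^2)"
    using E7[of y 1 v x u 1] unfolding cuv1 cvx by (simp add: C11_def Y_def X_def)
  have S1: "KK1*(1 - Y*cu*X) = X*cu*F1p*(1 - Y*X*cu + Y*X*cu*cx) + Y*X*cu*C11 + Y*cx*X^2"
    by (rule st1[OF E1p E41 E6])
  have S4: "(Y - Y*cz*((cu + cx - cx*cu)*X) + cz)*f0 = (1 - Y*X*cu + Y*X*cu*cx)*F1 + Y*cz*C11 + Y*(cv-1)*cz*(KK0 - KK1)"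
    by (rule st2[OF E10 E11])
  have S5: "(1 + (1-cw)*Y - ((cu + cx - cx*cu)*X)*Y)*Fw = (1 - Y*X*cu + Y*X*cu*cx)*F1 + (1-cw)*Y*(cz-1)*f0
     - Y*cz*(Cw1 - C11) - Y*X*cx*Fwy + Y*(cv-1)*cz*(KKw - KK1)"
    by (rule st3[OF E1w E11 EFw])
  have S2: "KKw*(1 - Y*cu*cv*cw*X) = KK1*(1 - Y*cu*cv*X)" using E4w E41 by algebra
  have S2b: "KK0 = KK1*(1 - Y*cu*cv*X)" using E40 E41 by algebra
  have S3: "Cw1*(1 - Y*cu*cv*cw*X) = Y*cw*cv*cx*X^2" using E7w by algebra
  have S3b: "C11*(1 - Y*cu*cv*X) = Y*cv*cx*X^2" using E71 by algebra
  have ST: "(1 + (1-cw)*Y - ((cu + cx - cx*cu)*X)*Y)*Fw*(1 - Y*cu*X)*(1 - Y*cu*cv*cw*X)*(Y - Y*cz*((cu + cx - cx*cu)*X) + cz)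
     = cx*Y*cz*cv*X^2*(Y^2*cu*cw*cv*(1-cz)*X + cz*(Y - Y*((cu + cx - cx*cu)*X) + 1))*Y*(1-cw)
       - X*cx*Fwy*Y*(1 - Y*cu*X)*(1 - Y*cu*cv*cw*X)*(Y - Y*cz*((cu + cx - cx*cu)*X) + cz)
       + (1 - Y*X*cu + Y*X*cu*cx)*(cw*Y*(1-cz) + cz*(Y - Y*((cu + cx - cx*cu)*X) + 1))*F1*(1 - Y*cu*X)*(1 - Y*cu*cv*cw*X)
       + Y^2*cu^2*cv*cz*(1-cv)*X^2*(1 - Y*X*cu + Y*X*cu*cx)*(Y^2*cu*cw*cv*(1-cz)*X + cz*(Y - Y*((cu + cx - cx*cu)*X) + 1))*F1p*(1-cw)"
    by (rule st4[OF S1 S4 S5 S2 S2b S3 S3b])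
  define P1s where "P1s = 1 - fps_const (y * u) * (fps_X :: 'a fps)"
  define P2s where "P2s = 1 - fps_const (y * u * v * w) * (fps_X :: 'a fps)"
  define Ds where "Ds = fps_const y - fps_const (y * z) * r + fps_const z"
  define iP1 where "iP1 = inverse P1s"
  define iP2 where "iP2 = inverse P2s"
  define iD where "iD = inverse Ds"
  have r': "r = (cu + cx - cx*cu)*X" unfolding r_def X_def cu_def cx_def by simp
  have i1: "(1 - Y*cu*X) * iP1 = 1"
  proof -
    have "P1s * iP1 = 1" unfolding iP1_def by (rule inverse_mult_eq_1') (simp add: P1s_def)
    moreover have "1 - Y*cu*X = P1s" by (simp add: P1s_def Y_def cu_def X_def)
    ultimately show ?thesis by simp
  qed
  have i2: "(1 - Y*cu*cv*cw*X) * iP2 = 1"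
  proof -
    have "P2s * iP2 = 1" unfolding iP2_def by (rule inverse_mult_eq_1') (simp add: P2s_def)
    moreover have "1 - Y*cu*cv*cw*X = P2s" by (simp add: P2s_def Y_def cu_def cv_def cw_def X_def)
    ultimately show ?thesis by simp
  qed
  have i3: "(Y - Y*cz*((cu + cx - cx*cu)*X) + cz) * iD = 1"
  proof -
    have "Ds $ 0 = y + z" by (simp add: Ds_def r_def)
    hence "Ds * iD = 1" unfolding iD_def using assms(3) by (intro inverse_mult_eq_1') simp
    moreover have "Y - Y*cz*((cu + cx - cx*cu)*X) + cz = Ds" unfolding Ds_def r' Y_def cz_def by simp
    ultimately show ?thesis by simp
  qed
  have i4: "Y * iy = 1" using assms(1) by (simp add: Y_def iy_def)
  have i5: "(1 - cw) * iw = 1" using assms(2) c1w[symmetric] by (simp add: iw_def)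
  have FIN: "(1 - (((cu + cx - cx*cu)*X)*Y - 1)*(iy*iw))*Fw = cx*Y*cz*cv*X^2*(Y^2*cu*cw*cv*(1-cz)*X + cz*(Y - Y*((cu + cx - cx*cu)*X) + 1))*(iP1*iP2*iD) - X*cx*iw*Fwy
     + (cu*cx*X + iy - cu*X)*(cw*Y*(1-cz) + cz*(Y - Y*((cu + cx - cx*cu)*X) + 1))*(iw*iD)*F1
     + Y^2*cu^2*cv*cz*(1-cv)*X^2*(cu*cx*X + iy - cu*X)*iP1*(Y^2*cu*cw*cv*(1-cz)*X + cz*(Y - Y*((cu + cx - cx*cu)*X) + 1))*(iP2*iD)*F1p"
    by (rule fin[OF ST i1 i2 i3 i4 i5])
  have G1: "Fgf x y w u z v = Fw" unfolding Fw_def by (rule Fgf_eq)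
  have G2: "Fgf x (w * y) 1 u z v = Fwy" unfolding Fwy_def by (rule Fgf_eq)
  have G3: "Fgf x y 1 u z v = F1" unfolding F1_def by (rule Fgf_eq)
  have G4: "Fgf x y 1 u 1 v = F1p" unfolding F1p_def by (rule Fgf_eq)
  have I1: "inverse ((1 - fps_const (y * u) * fps_X) * (1 - fps_const (y * u * v * w) * fps_X)
                  * (fps_const y - fps_const (y * z) * r + fps_const z)) = iP1 * iP2 * iD"
    unfolding iP1_def iP2_def iD_def P1s_def P2s_def Ds_def by (simp add: fps_inverse_mult)
  have I2: "inverse (fps_const (1 - w) * (fps_const y - fps_const (y * z) * r + fps_const z)) = iw * iD"
    unfolding iw_def iD_def Ds_def by (simp add: fps_inverse_mult fps_const_inverse)
  have I3: "inverse ((1 - fps_const (y * u * v * w) * fps_X) * (fps_const y - fps_const (y * z) * r + fps_const z)) = iP2 * iD"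
    unfolding iP2_def iD_def P2s_def Ds_def by (simp add: fps_inverse_mult)
  have I4: "inverse (1 - fps_const (y * u) * fps_X) = iP1" unfolding iP1_def P1s_def ..
  have I5: "fps_const (inverse (y * (1 - w))) = iy * iw" by (simp add: iy_def iw_def)
  have K1: "fps_const (x * y * z * v) = cx*Y*cz*cv" by (simp add: cx_def Y_def cz_def cv_def)
  have K2: "fps_const (y ^ 2 * u * w * v * (1 - z)) = Y^2*cu*cw*cv*(1-cz)"
    unfolding Y_def cu_def cw_def cv_def cz_def by (simp only: fc_mult fc_sub fc_pow fps_const_1_eq_1)
  have K3: "fps_const (y * u) = Y*cu" by (simp add: Y_def cu_def)
  have K4: "fps_const (y * u * v * w) = Y*cu*cv*cw" by (simp add: Y_def cu_def cv_def cw_def)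
  have K5: "fps_const (y * z) = Y*cz" by (simp add: Y_def cz_def)
  have K6: "fps_const (u * x) = cu*cx" by (simp add: cu_def cx_def)
  have K7: "fps_const (w * y * (1 - z)) = cw*Y*(1-cz)"
    unfolding Y_def cw_def cz_def by (simp only: fc_mult fc_sub fps_const_1_eq_1)
  have K8: "fps_const (y ^ 2 * u ^ 2 * v * z * (1 - v)) = Y^2*cu^2*cv*cz*(1-cv)"
    unfolding Y_def cu_def cv_def cz_def by (simp only: fc_mult fc_sub fc_pow fps_const_1_eq_1)
  have K9: "fps_const (y ^ 2 * u * v * w * (1 - z)) = Y^2*cu*cv*cw*(1-cz)"
    unfolding Y_def cu_def cw_def cv_def cz_def by (simp only: fc_mult fc_sub fc_pow fps_const_1_eq_1)
  show ?thesis
    unfolding G1 G2 G3 G4 I1 I2 I3 I4 I5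
    unfolding K1 K2 K3 K4 K5 K6 K7 K8 K9 r'
    unfolding Y_def[symmetric] cz_def[symmetric] cx_def[symmetric] cu_def[symmetric] cv_def[symmetric] cw_def[symmetric] iy_def[symmetric] iw_def[symmetric] X_def[symmetric]
    using FIN by algebra
qed

end
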